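(* On $T^*(\mathbb R^\ell\times\mathbb T)$ with coordinates $(q,\phi;p,\gamma)$ consider $$H(q,\phi;p,\gamma)=\tfrac12\big(p\cdot p+2\gamma\,a(q,\phi)\cdot p+h(q,\phi)\gamma^2\big)+U(q,\phi),$$ $2\pi$-periodic in $\phi$, with $a=a_0(q)+\epsilon a_1(q,\phi)$, $h=h_0(q)+\epsilon h_1(q,\phi)$, $U=U_0(q)+\epsilon U_1(q,\phi)$, where $a_1,h_1,U_1$ have zero mean in $\phi$. Consider the system (Hamiltonian for $\omega=\frac1\epsilon dq\wedge dp+d\phi\wedge d\gamma$) $$\dot q=\epsilon(p+\gamma a),\quad \dot\phi=a\cdot p+h\gamma,\quad \dot p=-\epsilon\,\partial_q\big(\gamma a\cdot p+\tfrac12h\gamma^2+U\big),\quad \dot\gamma=-\epsilon\,\partial_\phi\big(\gamma a_1\cdot p+\tfrac12 h_1\gamma^2+U_1\big),$$ and the averaged system for $\bar H(Q,P,\mu)=\tfrac12P\cdot P+\mu\,a_0(Q)\cdot P+\tfrac12\mu^2h_0(Q)+U_0(Q)$: $$\dot Q=\epsilon(P+\mu a_0(Q)),\quad \dot P=-\epsilon\,\partial_Q\big(\mu a_0(Q)\cdot P+\tfrac12h_0(Q)\mu^2+U_0(Q)\big),\quad\dot\mu=0.$$ Assume the data are $C^3$-bounded on $D\times\mathbb T$ for a domain $D\subset\mathbb R^{2\ell+1}$ of $(q,p,\gamma)$, that the fast frequency satisfies $a\cdot p+h\gamma>C>0$ there, and that the averaged solution $(Q(t),P(t),\mu)$ stays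 in a subdomain $D_\delta$ whose $\delta$-neighbourhood lies in $D$ for $0\le t\le1/\epsilon$. Then there exist $\epsilon_0>0$ and $C_0$ independent of $\epsilon$ such that for $0<\epsilon<\epsilon_0$, solutions with equal initial data $(q(0),p(0),\gamma(0))=(Q(0),P(0),\mu)$ satisfy $|\gamma(t)-\mu|+|q(t)-Q(t)|+|p(t)-P(t)|<C_0\epsilon$ for all $0\le t\le1/\epsilon$.
   Context: Dot denotes the Euclidean inner product on $\mathbb R^\ell$ and also the time derivative; $\mathbb T=S^1=\mathbb R/2\pi\mathbb Z$. *)

theory Defs
  imports "HOL-Analysis.Analysis"
begin

definition C3_bounded_on ::
  "('a::real_normed_vector) set \<Rightarrow> ('a \<Rightarrow> 'b::real_normed_vector) \<Rightarrow> bool" where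
  "C3_bounded_on S f \<longleftrightarrow>
     (\<exists>D1 D2 D3.
        (\<forall>x\<in>S. (f has_derivative blinfun_apply (D1 x)) (at x)) \<and>
        (\<forall>x\<in>S. (D1 has_derivative blinfun_apply (D2 x)) (at x)) \<and>
        (\<forall>x\<in>S. (D2 has_derivative blinfun_apply (D3 x)) (at x)) \<and>
        continuous_on S D3 \<and>
        bounded (f ` S) \<and> bounded (D1 ` S) \<and> bounded (D2 ` S) \<and> bounded (D3 ` S))"

definition pert :: "real \<Rightarrow> ('a \<Rightarrow> 'b::real_vector) \<Rightarrow> ('a \<Rightarrow> real \<Rightarrow> 'b) \<Rightarrow> 'a \<Rightarrow> real \<Rightarrow> 'b" where
  "pert eps f0 f1 q \<phi> = f0 q + eps *\<^sub>R f1 q \<phi>"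

definition full_sol ::
  "real \<Rightarrow> ('a::euclidean_space \<Rightarrow> 'a) \<Rightarrow> ('a \<Rightarrow> real \<Rightarrow> 'a) \<Rightarrow>
   ('a \<Rightarrow> real) \<Rightarrow> ('a \<Rightarrow> real \<Rightarrow> real) \<Rightarrow> ('a \<Rightarrow> real) \<Rightarrow> ('a \<Rightarrow> real \<Rightarrow> real) \<Rightarrow>
   (real \<Rightarrow> 'a) \<Rightarrow> (real \<Rightarrow> real) \<Rightarrow> (real \<Rightarrow> 'a) \<Rightarrow> (real \<Rightarrow> real) \<Rightarrow> bool" where
  "full_sol eps a0 a1 h0 h1 U0 U1 q \<phi> p \<gamma> \<longleftrightarrow>
     (\<forall>t\<in>{0..1/eps}.
        let a = pert eps a0 a1; h = pert eps h0 h1; U = pert eps U0 U1 in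
        (q has_vector_derivative
            eps *\<^sub>R (p t + \<gamma> t *\<^sub>R a (q t) (\<phi> t))) (at t within {0..1/eps}) \<and>
        (\<phi> has_vector_derivative
            (a (q t) (\<phi> t) \<bullet> p t + h (q t) (\<phi> t) * \<gamma> t)) (at t within {0..1/eps}) \<and>
        (\<exists>g. GDERIV (\<lambda>x. \<gamma> t * (a x (\<phi> t) \<bullet> p t) + (1/2) * h x (\<phi> t) * (\<gamma> t)\<^sup>2
                          + U x (\<phi> t)) (q t) :> g \<and>
             (p has_vector_derivative (- eps) *\<^sub>R g) (at t within {0..1/eps})) \<and>
        (\<exists>d. ((\<lambda>\<psi>. \<gamma> t * (a1 (q t) \<psi> \<bullet> p t) + (1/2) * h1 (q t) \<psi> * (\<gamma> t)\<^sup>2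
                          + U1 (q t) \<psi>) has_real_derivative d) (at (\<phi> t)) \<and>
             (\<gamma> has_vector_derivative (- eps * d)) (at t within {0..1/eps})))"

definition avg_sol ::
  "real \<Rightarrow> ('a::euclidean_space \<Rightarrow> 'a) \<Rightarrow> ('a \<Rightarrow> real) \<Rightarrow> ('a \<Rightarrow> real) \<Rightarrow>
   (real \<Rightarrow> 'a) \<Rightarrow> (real \<Rightarrow> 'a) \<Rightarrow> real \<Rightarrow> bool" where
  "avg_sol eps a0 h0 U0 Q P \<mu> \<longleftrightarrow>
     (\<forall>t\<in>{0..1/eps}.
        (Q has_vector_derivative eps *\<^sub>R (P t + \<mu> *\<^sub>R a0 (Q t))) (at t within {0..1/eps}) \<and>
        (\<exists>g. GDERIV (\<lambda>x. \<mu> * (a0 x \<bullet> P t) + (1/2) * h0 x * \<mu>\<^sup>2 + U0 x) (Q t) :> g \<and>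
             (P has_vector_derivative (- eps) *\<^sub>R g) (at t within {0..1/eps})))"

end

theory Submission
  imports Defs
begin

lemma mvt_vec:
  fixes f :: "real \<Rightarrow> 'b::real_normed_vector"
  assumes "a \<le> b" "\<And>x. x\<in>{a..b} \<Longrightarrow> (f has_vector_derivative f' x) (at x within {a..b})"
    "\<And>x. x\<in>{a..b} \<Longrightarrow> norm (f' x) \<le> B"
  shows "norm (f b - f a) \<le> B * (b - a)"
proof -
  have "norm (f b - f a) \<le> B * norm (b - a)"
  proof (rule differentiable_bound[where f'="\<lambda>x h. h *\<^sub>R f' x" and S="{a..b}"])
    fix x assume "x \<in> {a..b}"
    then show "(f has_derivative (\<lambda>h. h *\<^sub>R f' x)) (at x within {a..b})"
      using assms(2) by (simp add: has_vector_derivative_def)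
    have "onorm (\<lambda>h::real. h *\<^sub>R f' x) = onorm (\<lambda>h::real. h) * norm (f' x)"
      by (rule onorm_scaleR_left) (rule bounded_linear_ident)
    also have "\<dots> = norm (f' x)" by (simp add: onorm_id)
    finally show "onorm (\<lambda>h. h *\<^sub>R f' x) \<le> B" using assms(3) \<open>x\<in>{a..b}\<close> by simp
  qed (use assms in auto)
  then show ?thesis using assms(1) by simp
qed

lemma ftc_bound:
  fixes f :: "real \<Rightarrow> 'b::euclidean_space"
  assumes "0 \<le> t" "\<And>s. s\<in>{0..t} \<Longrightarrow> (f has_vector_derivative f' s) (at s within {0..t})"
    "continuous_on {0..t} g" "\<And>s. s\<in>{0..t} \<Longrightarrow> norm (f' s) \<le> g s"
  shows "norm (f t - f 0) \<le> integral {0..t} g"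
proof -
  have i: "(f' has_integral (f t - f 0)) {0..t}"
    by (rule fundamental_theorem_of_calculus) (use assms in auto)
  have "norm (integral {0..t} f') \<le> integral {0..t} g"
    by (rule integral_norm_bound_integral) (use i assms integrable_continuous_interval in auto)
  then show ?thesis using i by (simp add: integral_unique)
qed

lemma gronwall:
  fixes e :: "real \<Rightarrow> real"
  assumes "0 \<le> t" "continuous_on {0..t} e" "A \<ge> 0" "L \<ge> 0"
    "\<And>s. s\<in>{0..t} \<Longrightarrow> e s \<le> A + L * integral {0..s} e"
  shows "e t \<le> A * exp (L * t)"
proof -
  define I where "I s = integral {0..s} e" for s
  have dI: "(I has_vector_derivative e s) (at s within {0..t})" if "s \<in> {0..t}" for s
    unfolding I_def by (rule integral_has_vector_derivative) (use assms that in auto)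
  define K where "K s = exp (- L * s) * (A + L * I s)" for s
  define K' where "K' s = exp (- L * s) * (- L) * (A + L * I s) + exp (- L * s) * (L * e s)" for s
  have dK: "(K has_vector_derivative K' s) (at s within {0..t})" if "s \<in> {0..t}" for s
  proof -
    have d1: "((\<lambda>s. exp (- L * s)) has_vector_derivative exp (- L * s) * (- L)) (at s within {0..t})"
      unfolding has_real_derivative_iff_has_vector_derivative[symmetric]
      by (auto intro!: derivative_eq_intros)
    have d2: "((\<lambda>s. A + L * I s) has_vector_derivative L * e s) (at s within {0..t})"
      using dI[OF that] by (auto intro!: derivative_eq_intros)
    from has_vector_derivative_mult[OF d1 d2] show ?thesis unfolding K_def K'_def
      by (rule has_vector_derivative_eq_rhs) (simp add: algebra_simps)
  qed
  have "(K' has_integral (K t - K 0)) {0..t}"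
    by (rule fundamental_theorem_of_calculus) (use assms dK in auto)
  moreover have "((\<lambda>s. 0::real) has_integral 0) {0..t}" by simp
  moreover have "K' s \<le> 0" if "s \<in> {0..t}" for s
  proof -
    have "e s \<le> A + L * I s" using assms(5)[OF that] by (simp add: I_def)
    then have "L * e s \<le> L * (A + L * I s)" using assms(4) by (simp add: mult_left_mono)
    then have "exp (- L * s) * (L * e s) \<le> exp (- L * s) * (L * (A + L * I s))"
      by (simp add: mult_left_mono)
    then show ?thesis unfolding K'_def by (simp add: algebra_simps)
  qed
  ultimately have "K t - K 0 \<le> 0" using has_integral_le by blast
  then have "exp (- L * t) * (A + L * I t) \<le> A" by (simp add: K_def I_def)
  then have "A + L * I t \<le> A * exp (L * t)"
    by (simp add: exp_minus field_simps)
  moreover have "e t \<le> A + L * I t" using assms(1,5) by (simp add: I_def)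
  ultimately show ?thesis by simp
qed

lemma bootstrap:
  fixes e :: "real \<Rightarrow> real"
  assumes "0 \<le> T" "continuous_on {0..T} e" "e 0 < c"
    "\<And>t. t\<in>{0..T} \<Longrightarrow> (\<forall>s\<in>{0..t}. e s \<le> c) \<Longrightarrow> e t < c"
  shows "\<forall>t\<in>{0..T}. \<forall>s\<in>{0..t}. e s \<le> c"
proof (rule ccontr)
  assume "\<not> ?thesis"
  then obtain t where t: "t \<in> {0..T}" "e t > c" by force
  have ct: "continuous_on {0..t} e" using assms(2) t by (auto intro: continuous_on_subset)
  define Z where "Z = {s \<in> {0..t}. e s = c}"
  have cZ: "closed Z" unfolding Z_def
    by (rule continuous_closed_preimage_constant[OF ct]) simp
  have "\<exists>x\<ge>0. x \<le> t \<and> e x = c" by (rule IVT') (use t assms ct in auto)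
  then have nZ: "Z \<noteq> {}" unfolding Z_def by auto
  have bZ: "bdd_below Z" unfolding Z_def by (auto intro: bdd_belowI[of _ 0])
  define t1 where "t1 = Inf Z"
  have t1Z: "t1 \<in> Z" unfolding t1_def by (rule closed_contains_Inf[OF nZ bZ cZ])
  have le: "t1 \<le> z" if "z \<in> Z" for z unfolding t1_def by (rule cInf_lower[OF that bZ])
  have "\<forall>s\<in>{0..t1}. e s \<le> c"
  proof
    fix s assume s: "s \<in> {0..t1}"
    show "e s \<le> c"
    proof (rule ccontr)
      assume "\<not> e s \<le> c"
      have "\<exists>x\<ge>0. x \<le> s \<and> e x = c"
        by (rule IVT') (use \<open>\<not> e s \<le> c\<close> s t1Z assms ct in \<open>auto simp: Z_def intro: continuous_on_subset\<close>)
      then obtain x where "0 \<le> x" "x \<le> s" "e x = c" by blast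
      then have "x \<in> Z" using s t1Z unfolding Z_def by auto
      then have "x = s" using le[of x] \<open>x \<le> s\<close> s by auto
      then show False using \<open>e x = c\<close> \<open>\<not> e s \<le> c\<close> by simp
    qed
  qed
  then have "e t1 < c" using assms(4)[of t1] t1Z t unfolding Z_def by auto
  then show False using t1Z unfolding Z_def by simp
qed

lemma grad_diff:
  assumes "GDERIV f x :> g" "(f has_derivative F) (at x)"
    "GDERIV f2 y :> g2" "(f2 has_derivative F2) (at y)"
    "\<And>v. \<bar>F v - F2 v\<bar> \<le> B * norm v" "B \<ge> 0"
  shows "norm (g - g2) \<le> B"
proof -
  have "F = (\<lambda>h. h \<bullet> g)" using has_derivative_unique assms(1,2) unfolding gderiv_def by blast
  moreover have "F2 = (\<lambda>h. h \<bullet> g2)" using has_derivative_unique assms(3,4) unfolding gderiv_def by blast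
  ultimately have "\<bar>(g - g2) \<bullet> g - (g - g2) \<bullet> g2\<bar> \<le> B * norm (g - g2)" using assms(5)[of "g - g2"] by simp
  then have "norm (g - g2) * norm (g - g2) \<le> B * norm (g - g2)"
    by (simp add: inner_diff_right[symmetric] power2_norm_eq_inner[symmetric] power2_eq_square)
  then show ?thesis using assms(6)
    by (metis mult_right_le_imp_le norm_ge_zero order.strict_iff_order mult_zero_right order_refl)
qed

lemma pd_q:
  assumes "(case_prod f has_derivative F) (at (x, y))"
  shows "((\<lambda>x. f x y) has_derivative (\<lambda>v. F (v, 0))) (at x within s)"
proof -
  have "((\<lambda>x. (x, y)) has_derivative (\<lambda>v. (v, 0))) (at x within s)"
    by (auto intro!: derivative_eq_intros)
  from has_derivative_compose[OF this assms] show ?thesis by simp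
qed

lemma pd_phi:
  assumes "(case_prod f has_derivative F) (at (x, y))"
  shows "((\<lambda>y. f x y) has_real_derivative F (0, 1)) (at y within s)"
proof -
  have "((\<lambda>y. (x, y)) has_derivative (\<lambda>v. (0, v))) (at y within s)"
    by (auto intro!: derivative_eq_intros)
  from has_derivative_compose[OF this assms] have d: "((\<lambda>y. f x y) has_derivative (\<lambda>v. F (0, v))) (at y within s)" by simp
  have lin: "linear F" using assms has_derivative_linear by blast
  have "(\<lambda>v. F (0, v)) = (\<lambda>v. v *\<^sub>R F (0, 1))"
  proof
    fix v::real have "F (0, v) = F (v *\<^sub>R (0, 1))" by simp
    also have "\<dots> = v *\<^sub>R F (0, 1)" using lin linear_scale by blast
    finally show "F (0, v) = v *\<^sub>R F (0, 1)" .
  qed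
  with d have "((\<lambda>y. f x y) has_derivative (\<lambda>v. v * F (0, 1))) (at y within s)" by simp
  then show ?thesis unfolding has_field_derivative_def
    by (rule has_derivative_eq_rhs) (auto simp: fun_eq_iff)
qed

lemma traj2:
  assumes "(case_prod f has_derivative F) (at (qf t, pf t))"
    "(qf has_vector_derivative q') (at t within T)" "(pf has_vector_derivative p') (at t within T)"
  shows "((\<lambda>s. f (qf s) (pf s)) has_vector_derivative F (q', p')) (at t within T)"
proof -
  have "((\<lambda>s. (qf s, pf s)) has_vector_derivative (q', p')) (at t within T)"
    using assms(2,3) by (rule has_vector_derivative_Pair)
  then have d: "((\<lambda>s. (qf s, pf s)) has_derivative (\<lambda>h. h *\<^sub>R (q', p'))) (at t within T)"
    by (simp add: has_vector_derivative_def)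
  have lin: "linear F" using assms(1) has_derivative_linear by blast
  from has_derivative_compose[OF d assms(1)]
  have "((\<lambda>s. f (qf s) (pf s)) has_derivative (\<lambda>h. F (h *\<^sub>R (q', p')))) (at t within T)" by simp
  moreover have "(\<lambda>h. F (h *\<^sub>R (q', p'))) = (\<lambda>h. h *\<^sub>R F (q', p'))"
    using lin linear_scale by blast
  ultimately show ?thesis by (simp add: has_vector_derivative_def)
qed

lemma traj1:
  assumes "(f has_derivative F) (at (qf t))"
    "(qf has_vector_derivative q') (at t within T)"
  shows "((\<lambda>s. f (qf s)) has_vector_derivative F q') (at t within T)"
proof -
  have d: "(qf has_derivative (\<lambda>h. h *\<^sub>R q')) (at t within T)"
    using assms(2) by (simp add: has_vector_derivative_def)
  have lin: "linear F" using assms(1) has_derivative_linear by blast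
  from has_derivative_compose[OF d assms(1)]
  have "((\<lambda>s. f (qf s)) has_derivative (\<lambda>h. F (h *\<^sub>R q'))) (at t within T)" by simp
  moreover have "(\<lambda>h. F (h *\<^sub>R q')) = (\<lambda>h. h *\<^sub>R F q')"
    using lin linear_scale by blast
  ultimately show ?thesis by (simp add: has_vector_derivative_def)
qed



lemma int_aff:
  fixes f :: "real \<Rightarrow> real"
  assumes "0 \<le> s" "continuous_on {0..s} f"
  shows "integral {0..s} (\<lambda>x. a * (b * f x + c)) = a * b * integral {0..s} f + a * c * s"
proof -
  have i: "f integrable_on {0..s}" using assms(2) integrable_continuous_interval by blast
  have "integral {0..s} (\<lambda>x. a * (b * f x + c)) = integral {0..s} (\<lambda>x. (a * b) * f x + a * c)"
    by (simp add: algebra_simps)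
  also have "\<dots> = integral {0..s} (\<lambda>x. (a * b) * f x) + integral {0..s} (\<lambda>x. a * c)"
    by (rule integral_add) (use integrable_on_cmult_left[OF i, of "a*b"] in auto)
  also have "\<dots> = a * b * integral {0..s} f + a * c * s" using assms(1) by simp
  finally show ?thesis .
qed

lemma bl_le: "norm F \<le> B \<Longrightarrow> norm (blinfun_apply F v) \<le> B * norm v"
  by (meson norm_blinfun norm_ge_zero mult_right_mono order_trans)

lemma inner_le: "norm x \<le> X \<Longrightarrow> norm y \<le> Y \<Longrightarrow> \<bar>x \<bullet> y\<bar> \<le> X * Y"
  by (meson Cauchy_Schwarz_ineq2 mult_mono norm_ge_zero order_trans)

lemma amul: "\<bar>x::real\<bar> \<le> X \<Longrightarrow> \<bar>y\<bar> \<le> Y \<Longrightarrow> \<bar>x * y\<bar> \<le> X * Y"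
  by (simp add: abs_mult mult_mono')

lemma nscale: "\<bar>x::real\<bar> \<le> X \<Longrightarrow> norm y \<le> Y \<Longrightarrow> norm (x *\<^sub>R y) \<le> X * Y"
  by (simp add: mult_mono')

lemma lip:
  assumes "\<And>x. x \<in> ball c r \<Longrightarrow> (f has_derivative blinfun_apply (F x)) (at x)"
    "\<And>x. x \<in> ball c r \<Longrightarrow> norm (F x) \<le> B" "y \<in> ball c r" "r > 0"
  shows "norm (f y - f c) \<le> B * norm (y - c)"
proof (rule differentiable_bound[where S="ball c r" and f'="\<lambda>x. blinfun_apply (F x)"])
  show "convex (ball c r)" by simp
  fix x assume "x \<in> ball c r"
  then show "(f has_derivative blinfun_apply (F x)) (at x within ball c r)"
    using assms(1) has_derivative_at_withinI by blast
  show "onorm (blinfun_apply (F x)) \<le> B" using assms(2) \<open>x \<in> ball c r\<close> by (simp add: norm_blinfun.rep_eq[symmetric])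
qed (use assms in auto)

lemma pd_phi_v:
  assumes "(case_prod f has_derivative F) (at (x, y))"
  shows "((\<lambda>y. f x y) has_vector_derivative F (0, 1)) (at y within s)"
proof -
  have "((\<lambda>y. (x, y)) has_derivative (\<lambda>v. (0, v))) (at y within s)"
    by (auto intro!: derivative_eq_intros)
  from has_derivative_compose[OF this assms] have d: "((\<lambda>y. f x y) has_derivative (\<lambda>v. F (0, v))) (at y within s)" by simp
  have lin: "linear F" using assms has_derivative_linear by blast
  have "(\<lambda>v. F (0, v)) = (\<lambda>v. v *\<^sub>R F (0, 1))"
  proof
    fix v::real have "F (0, v) = F (v *\<^sub>R (0, 1))" by simp
    also have "\<dots> = v *\<^sub>R F (0, 1)" using lin linear_scale by blast
    finally show "F (0, v) = v *\<^sub>R F (0, 1)" .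
  qed
  with d show ?thesis by (simp add: has_vector_derivative_def)
qed

lemma inner_vd:
  assumes "(f has_vector_derivative f') (at t within T)" "(g has_vector_derivative g') (at t within T)"
  shows "((\<lambda>s. f s \<bullet> g s) has_field_derivative (f t \<bullet> g' + f' \<bullet> g t)) (at t within T)"
  unfolding has_real_derivative_iff_has_vector_derivative
  by (rule bounded_bilinear.has_vector_derivative[OF bounded_bilinear_inner assms])

lemma blin_split: "blinfun_apply F (v, w) = blinfun_apply F (v, 0) + w *\<^sub>R blinfun_apply F (0, 1)"
proof -
  have "(v, w) = (v, 0) + w *\<^sub>R (0, 1)" by simp
  then show ?thesis by (metis blinfun.add_right blinfun.scaleR_right)
qed

lemma bl_le2: "norm F \<le> M \<Longrightarrow> norm v \<le> V \<Longrightarrow> 0 \<le> M \<Longrightarrow> norm (blinfun_apply F v) \<le> M * V"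
  by (meson norm_blinfun norm_ge_zero mult_mono order_trans)

lemma mono5: "a \<le> A \<Longrightarrow> b \<le> B \<Longrightarrow> c \<le> Cc \<Longrightarrow> d \<le> Dd \<Longrightarrow> e \<le> (Ee::real)
  \<Longrightarrow> a + b + 1/2 * (c + d) + e \<le> A + B + 1/2 * (Cc + Dd) + Ee"
  by (intro add_mono mult_left_mono) auto
lemma sum5: "\<bar>a::real\<bar> \<le> A \<Longrightarrow> \<bar>b\<bar> \<le> B \<Longrightarrow> \<bar>c\<bar> \<le> Cc \<Longrightarrow> \<bar>d\<bar> \<le> Dd \<Longrightarrow> \<bar>e\<bar> \<le> Ee
  \<Longrightarrow> \<bar>a + b + 1/2 * (c + d) + e\<bar> \<le> A + B + 1/2 * (Cc + Dd) + Ee"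
  unfolding abs_le_iff
proof (elim conjE, intro conjI)
  assume h: "a \<le> A" "- a \<le> A" "b \<le> B" "- b \<le> B" "c \<le> Cc" "- c \<le> Cc" "d \<le> Dd" "- d \<le> Dd" "e \<le> Ee" "- e \<le> Ee"
  show "a + b + 1/2 * (c + d) + e \<le> A + B + 1/2 * (Cc + Dd) + Ee" by (rule mono5) (use h in auto)
  have "- (a + b + 1/2 * (c + d) + e) = (- a) + (- b) + 1/2 * ((- c) + (- d)) + (- e)" by (simp add: field_simps)
  also have "\<dots> \<le> A + B + 1/2 * (Cc + Dd) + Ee" by (rule mono5) (use h in auto)
  finally show "- (a + b + 1/2 * (c + d) + e) \<le> A + B + 1/2 * (Cc + Dd) + Ee" .
qed
lemma sum4: "\<bar>a::real\<bar> \<le> A \<Longrightarrow> \<bar>b\<bar> \<le> B \<Longrightarrow> \<bar>c\<bar> \<le> Cc \<Longrightarrow> \<bar>d\<bar> \<le> Dd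
  \<Longrightarrow> \<bar>a + b + (c + d)\<bar> \<le> A + B + Cc + Dd"
  by (smt (verit))

lemma KG_id: "(e*Db)*(M*Rp) + Rg*(M*(e*Gb) + (M*(e*Qb))*Rp) + 1/2*((M*(e*Qb))*Rg\<^sup>2 + M*(2*Rg*(e*Db))) + M*(e*(Qb::real)) = e*(Db*(M*Rp) + Rg*(M*Gb + M*Qb*Rp) + 1/2*(M*Qb*Rg\<^sup>2 + M*(2*Rg*Db)) + M*Qb)"
  by (simp add: algebra_simps)
lemma KO_id: "2*M*(e*Gb) + (M*(e*Qb) + e*(M*(Qb+Ob)))*Rp + (M*(e*Qb) + e*(M*(Qb+Ob)))*Rg + 2*M*(e*(Db::real)) = e*(2*M*Gb + (M*Qb + M*(Qb+Ob))*Rp + (M*Qb + M*(Qb+Ob))*Rg + 2*M*Db)"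
  by (simp add: algebra_simps)
lemma KW_id: "e*KG/C + Db*(e*KO)/C\<^sup>2 = e*(KG/C + Db*KO/(C::real)\<^sup>2)"
  by (simp add: algebra_simps)

lemma eps_id: "e > 0 \<Longrightarrow> (e*e*K)*(1/e) = e*(K::real)" by (simp add: field_simps)
lemma gam_comb: "\<bar>x\<bar> \<le> e*K \<Longrightarrow> \<bar>g1\<bar> \<le> B \<Longrightarrow> \<bar>g0\<bar> \<le> B \<Longrightarrow> 0 < (e::real) \<Longrightarrow> \<bar>x - e*g1 + e*g0\<bar> \<le> e*(K + 2*B)"
proof -
  assume a: "\<bar>x\<bar> \<le> e*K" "\<bar>g1\<bar> \<le> B" "\<bar>g0\<bar> \<le> B" "0 < e"
  have "\<bar>e*g1\<bar> \<le> e*B" "\<bar>e*g0\<bar> \<le> e*B" using a by (simp_all add: abs_mult mult_left_mono)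
  note b = this
  have "\<bar>x - e*g1 + e*g0\<bar> \<le> \<bar>x - e*g1\<bar> + \<bar>e*g0\<bar>" by (rule abs_triangle_ineq)
  also have "\<dots> \<le> (\<bar>x\<bar> + \<bar>e*g1\<bar>) + \<bar>e*g0\<bar>" by (rule add_right_mono[OF abs_triangle_ineq4])
  also have "\<dots> \<le> (e*K + e*B) + e*B" using a(1) b by (intro add_mono) auto
  also have "\<dots> = e*(K + 2*B)" by (simp add: algebra_simps)
  finally show ?thesis .
qed
lemma qb_gen:
  assumes "0 \<le> x" "0 \<le> y" "0 \<le> M" "0 \<le> mu" "0 \<le> k1" "0 \<le> k3" "0 \<le> D" "0 < (e::real)" "\<bar>g\<bar> \<le> e*Kg" "0 \<le> RgM"
  shows "e*(y + M*\<bar>g\<bar> + mu*M*x + e*RgM) \<le> e*((1 + mu*M + k1)*(x+y) + e*((M + k3)*Kg + RgM + D))"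
proof -
  have "0 \<le> e*Kg" using assms(9) abs_ge_zero[of g] by linarith
  then have Kg: "0 \<le> Kg" using assms(8) by (simp add: zero_le_mult_iff)
  have 1: "M*\<bar>g\<bar> \<le> e*(M*Kg)" using mult_left_mono[OF assms(9) assms(3)] by (simp add: ac_simps)
  have 2: "0 \<le> e*(k3*Kg)" using assms Kg by simp
  have 3: "y \<le> (1 + mu*M + k1)*y" using assms by (simp add: algebra_simps)
  have 4: "mu*M*x \<le> (1 + mu*M + k1)*x" using assms by (simp add: algebra_simps)
  have 5: "0 \<le> e*D" using assms by simp
  have "y + M*\<bar>g\<bar> + mu*M*x + e*RgM \<le> (1 + mu*M + k1)*(x+y) + e*((M + k3)*Kg + RgM + D)"
    using 1 2 3 4 5 by (simp add: algebra_simps)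
  then show ?thesis using assms(8) by (simp add: mult_left_mono)
qed
lemma pb_gen:
  assumes "0 \<le> x" "0 \<le> y" "0 \<le> M" "0 \<le> mu" "0 \<le> k1" "0 \<le> k3" "0 \<le> D" "0 < (e::real)" "\<bar>g\<bar> \<le> e*Kg" "0 \<le> RgM"
  shows "e*(k1*x + mu*M*y + k3*\<bar>g\<bar> + e*D) \<le> e*((1 + mu*M + k1)*(x+y) + e*((M + k3)*Kg + RgM + D))"
proof -
  have "0 \<le> e*Kg" using assms(9) abs_ge_zero[of g] by linarith
  then have Kg: "0 \<le> Kg" using assms(8) by (simp add: zero_le_mult_iff)
  have 1: "k3*\<bar>g\<bar> \<le> e*(k3*Kg)" using mult_left_mono[OF assms(9) assms(6)] by (simp add: ac_simps)
  have 2: "0 \<le> e*(M*Kg)" using assms Kg by simp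
  have 3: "mu*M*y \<le> (1 + mu*M + k1)*y" using assms by (simp add: algebra_simps)
  have 4: "k1*x \<le> (1 + mu*M + k1)*x" using assms by (simp add: algebra_simps)
  have 5: "0 \<le> e*RgM" using assms by simp
  have "k1*x + mu*M*y + k3*\<bar>g\<bar> + e*D \<le> (1 + mu*M + k1)*(x+y) + e*((M + k3)*Kg + RgM + D)"
    using 1 2 3 4 5 by (simp add: algebra_simps)
  then show ?thesis using assms(8) by (simp add: mult_left_mono)
qed
lemma E_gen: "E \<le> 2*(e*L*I + e*(e*K2) * s) \<Longrightarrow> e * s \<le> 1 \<Longrightarrow> 0 \<le> K2 \<Longrightarrow> 0 < e \<Longrightarrow> E \<le> 2*e*K2 + (2*e*L)*(I::real)"
proof -
  assume a: "E \<le> 2*(e*L*I + e*(e*K2) * s)" "e * s \<le> 1" "0 \<le> K2" "0 < e"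
  have "e*(e*K2) * s = (e*K2)*(e * s)" by (simp add: ac_simps)
  also have "\<dots> \<le> (e*K2)*1" using a by (intro mult_left_mono) auto
  finally show ?thesis using a(1) by (simp add: algebra_simps)
qed
lemma fin_gen: "g \<le> e*Kg \<Longrightarrow> E \<le> 2*e*K2*exp(2*e*L*t) \<Longrightarrow> e*t \<le> 1 \<Longrightarrow> 0 < e \<Longrightarrow> 0 \<le> K2 \<Longrightarrow> 0 \<le> L \<Longrightarrow> 0 \<le> t
  \<Longrightarrow> g + E \<le> e*(Kg + 2*K2*exp(2*(L::real)))"
proof -
  assume a: "g \<le> e*Kg" "E \<le> 2*e*K2*exp(2*e*L*t)" "e*t \<le> 1" "0 < e" "0 \<le> K2" "0 \<le> L" "0 \<le> t"
  have "2*e*L*t \<le> 2*L" using mult_left_mono[OF a(3), of "2*L"] a by (simp add: ac_simps)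
  then have "exp(2*e*L*t) \<le> exp(2*L)" by simp
  then have "2*e*K2*exp(2*e*L*t) \<le> 2*e*K2*exp(2*L)" using a by (intro mult_left_mono) auto
  then show ?thesis using a by (simp add: algebra_simps)
qed

lemma pos_mult_nonneg: "0 < (e::real) \<Longrightarrow> \<bar>x\<bar> \<le> e * K \<Longrightarrow> 0 \<le> K"
  by (metis abs_ge_zero order_trans zero_le_mult_iff not_less)
lemma twice: "(E::real) \<le> i + i \<Longrightarrow> i = X \<Longrightarrow> E \<le> 2 * X" by simp



definition KF :: "real \<Rightarrow> real \<Rightarrow> real \<Rightarrow> real \<Rightarrow> real \<Rightarrow> real" where
  "KF M \<mu> \<delta> C n = (
     let c1 = 1/2 * \<mu>\<^sup>2 * M + M;
         RP = (n + c1) * exp (\<bar>\<mu>\<bar> * M);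
         Rp = RP + \<delta>;
         Rg = \<bar>\<mu>\<bar> + \<delta>;
         k1 = \<bar>\<mu>\<bar> * M * Rp + 1/2 * M * Rg\<^sup>2 + M;
         k3 = M * Rp + 1/2 * M * (Rg + \<bar>\<mu>\<bar>);
         Db = Rg * M * Rp + 1/2 * M * Rg\<^sup>2 + M;
         Qb = Rp + Rg * (2 * M);
         Ob = 2 * M * Rp + 2 * M * Rg;
         Gb = \<bar>\<mu>\<bar> * M * RP + c1 + k1 * \<delta> + \<bar>\<mu>\<bar> * M * \<delta> + k3 * \<delta> + Db;
         KG = Db * (M * Rp) + Rg * (M * Gb + M * Qb * Rp) + 1/2 * (M * Qb * Rg\<^sup>2 + M * (2 * Rg * Db)) + M * Qb;
         KO = 2 * M * Gb + (M * Qb + M * (Qb + Ob)) * Rp + (M * Qb + M * (Qb + Ob)) * Rg + 2 * M * Db;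
         KW = KG / C + Db * KO / C\<^sup>2;
         Kgam = KW + 2 * (Db / C);
         Lc = 1 + \<bar>\<mu>\<bar> * M + k1;
         K2 = (M + k3) * Kgam + Rg * M + Db
     in Kgam + 2 * K2 * exp (2 * Lc))"

locale avgs =
  fixes a0 :: "'a::euclidean_space \<Rightarrow> 'a" and a1 :: "'a \<Rightarrow> real \<Rightarrow> 'a"
    and h0 U0 :: "'a \<Rightarrow> real" and h1 U1 :: "'a \<Rightarrow> real \<Rightarrow> real"
    and D Dd :: "('a \<times> 'a \<times> real) set"
    and \<delta> C \<mu> M \<epsilon> :: real
    and Q P q p :: "real \<Rightarrow> 'a" and \<phi> \<gamma> :: "real \<Rightarrow> real"
    and A1 :: "'a \<Rightarrow> 'a \<Rightarrow>\<^sub>L 'a" and A2 :: "'a \<Rightarrow> 'a \<Rightarrow>\<^sub>L 'a \<Rightarrow>\<^sub>L 'a"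
    and H1 V1 :: "'a \<Rightarrow> 'a \<Rightarrow>\<^sub>L real" and H2 V2 :: "'a \<Rightarrow> 'a \<Rightarrow>\<^sub>L 'a \<Rightarrow>\<^sub>L real"
    and B1 :: "'a \<times> real \<Rightarrow> ('a \<times> real) \<Rightarrow>\<^sub>L 'a"
    and K1 W1 :: "'a \<times> real \<Rightarrow> ('a \<times> real) \<Rightarrow>\<^sub>L real"
  assumes dA: "\<And>x. x \<in> fst ` D \<Longrightarrow> (a0 has_derivative blinfun_apply (A1 x)) (at x)"
    and dA2: "\<And>x. x \<in> fst ` D \<Longrightarrow> (A1 has_derivative blinfun_apply (A2 x)) (at x)"
    and dH: "\<And>x. x \<in> fst ` D \<Longrightarrow> (h0 has_derivative blinfun_apply (H1 x)) (at x)"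
    and dH2: "\<And>x. x \<in> fst ` D \<Longrightarrow> (H1 has_derivative blinfun_apply (H2 x)) (at x)"
    and dV: "\<And>x. x \<in> fst ` D \<Longrightarrow> (U0 has_derivative blinfun_apply (V1 x)) (at x)"
    and dV2: "\<And>x. x \<in> fst ` D \<Longrightarrow> (V1 has_derivative blinfun_apply (V2 x)) (at x)"
    and dB: "\<And>x y. x \<in> fst ` D \<Longrightarrow> (case_prod a1 has_derivative blinfun_apply (B1 (x, y))) (at (x, y))"
    and dK: "\<And>x y. x \<in> fst ` D \<Longrightarrow> (case_prod h1 has_derivative blinfun_apply (K1 (x, y))) (at (x, y))"
    and dW: "\<And>x y. x \<in> fst ` D \<Longrightarrow> (case_prod U1 has_derivative blinfun_apply (W1 (x, y))) (at (x, y))"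
    and bA: "\<And>x. x \<in> fst ` D \<Longrightarrow> norm (a0 x) \<le> M \<and> norm (A1 x) \<le> M \<and> norm (A2 x) \<le> M"
    and bH: "\<And>x. x \<in> fst ` D \<Longrightarrow> \<bar>h0 x\<bar> \<le> M \<and> norm (H1 x) \<le> M \<and> norm (H2 x) \<le> M"
    and bV: "\<And>x. x \<in> fst ` D \<Longrightarrow> \<bar>U0 x\<bar> \<le> M \<and> norm (V1 x) \<le> M \<and> norm (V2 x) \<le> M"
    and bB: "\<And>x y. x \<in> fst ` D \<Longrightarrow> norm (a1 x y) \<le> M \<and> norm (B1 (x, y)) \<le> M"
    and bK: "\<And>x y. x \<in> fst ` D \<Longrightarrow> \<bar>h1 x y\<bar> \<le> M \<and> norm (K1 (x, y)) \<le> M"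
    and bW: "\<And>x y. x \<in> fst ` D \<Longrightarrow> \<bar>U1 x y\<bar> \<le> M \<and> norm (W1 (x, y)) \<le> M"
    and M0: "M \<ge> 0" and \<delta>0: "\<delta> > 0" and C0: "C > 0" and \<epsilon>0: "\<epsilon> > 0" and \<epsilon>1: "\<epsilon> \<le> 1"
    and nbhd: "\<forall>x\<in>Dd. ball x \<delta> \<subseteq> D" and DdD: "Dd \<subseteq> D"
    and freq: "\<forall>(x, y, g)\<in>D. \<forall>\<psi>. pert \<epsilon> a0 a1 x \<psi> \<bullet> y + pert \<epsilon> h0 h1 x \<psi> * g > C"
    and avg: "avg_sol \<epsilon> a0 h0 U0 Q P \<mu>"
    and full: "full_sol \<epsilon> a0 a1 h0 h1 U0 U1 q \<phi> p \<gamma>"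
    and stay: "\<forall>t\<in>{0..1/\<epsilon>}. (Q t, P t, \<mu>) \<in> Dd"
    and init: "q 0 = Q 0" "p 0 = P 0" "\<gamma> 0 = \<mu>"
begin

abbreviation "T \<equiv> {0..1/\<epsilon>}"
abbreviation "S \<equiv> fst ` D"

definition "gf t = (SOME g. GDERIV (\<lambda>x. \<gamma> t * (pert \<epsilon> a0 a1 x (\<phi> t) \<bullet> p t) + (1/2) * pert \<epsilon> h0 h1 x (\<phi> t) * (\<gamma> t)\<^sup>2
                          + pert \<epsilon> U0 U1 x (\<phi> t)) (q t) :> g \<and>
             (p has_vector_derivative (- \<epsilon>) *\<^sub>R g) (at t within T))"
definition "df t = (SOME d. ((\<lambda>\<psi>. \<gamma> t * (a1 (q t) \<psi> \<bullet> p t) + (1/2) * h1 (q t) \<psi> * (\<gamma> t)\<^sup>2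
                          + U1 (q t) \<psi>) has_real_derivative d) (at (\<phi> t)) \<and>
             (\<gamma> has_vector_derivative (- \<epsilon> * d)) (at t within T))"
definition "ga t = (SOME g. GDERIV (\<lambda>x. \<mu> * (a0 x \<bullet> P t) + (1/2) * h0 x * \<mu>\<^sup>2 + U0 x) (Q t) :> g \<and>
             (P has_vector_derivative (- \<epsilon>) *\<^sub>R g) (at t within T))"

lemma T_ne: "0 \<in> T" using \<epsilon>0 by simp

lemma qd: "t \<in> T \<Longrightarrow> (q has_vector_derivative \<epsilon> *\<^sub>R (p t + \<gamma> t *\<^sub>R pert \<epsilon> a0 a1 (q t) (\<phi> t))) (at t within T)"
  using full unfolding full_sol_def Let_def by blast
lemma \<phi>d: "t \<in> T \<Longrightarrow> (\<phi> has_vector_derivative (pert \<epsilon> a0 a1 (q t) (\<phi> t) \<bullet> p t + pert \<epsilon> h0 h1 (q t) (\<phi> t) * \<gamma> t)) (at t within T)"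
  using full unfolding full_sol_def Let_def by blast
lemma gf: "t \<in> T \<Longrightarrow> GDERIV (\<lambda>x. \<gamma> t * (pert \<epsilon> a0 a1 x (\<phi> t) \<bullet> p t) + (1/2) * pert \<epsilon> h0 h1 x (\<phi> t) * (\<gamma> t)\<^sup>2
                          + pert \<epsilon> U0 U1 x (\<phi> t)) (q t) :> gf t \<and>
             (p has_vector_derivative (- \<epsilon>) *\<^sub>R gf t) (at t within T)"
  unfolding gf_def by (rule someI_ex) (use full in \<open>auto simp: full_sol_def Let_def\<close>)
lemma df: "t \<in> T \<Longrightarrow> ((\<lambda>\<psi>. \<gamma> t * (a1 (q t) \<psi> \<bullet> p t) + (1/2) * h1 (q t) \<psi> * (\<gamma> t)\<^sup>2
                          + U1 (q t) \<psi>) has_real_derivative df t) (at (\<phi> t)) \<and>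
             (\<gamma> has_vector_derivative (- \<epsilon> * df t)) (at t within T)"
  unfolding df_def by (rule someI_ex) (use full in \<open>auto simp: full_sol_def Let_def\<close>)
lemma Qd: "t \<in> T \<Longrightarrow> (Q has_vector_derivative \<epsilon> *\<^sub>R (P t + \<mu> *\<^sub>R a0 (Q t))) (at t within T)"
  using avg unfolding avg_sol_def by blast
lemma ga: "t \<in> T \<Longrightarrow> GDERIV (\<lambda>x. \<mu> * (a0 x \<bullet> P t) + (1/2) * h0 x * \<mu>\<^sup>2 + U0 x) (Q t) :> ga t \<and>
             (P has_vector_derivative (- \<epsilon>) *\<^sub>R ga t) (at t within T)"
  unfolding ga_def by (rule someI_ex) (use avg in \<open>auto simp: avg_sol_def\<close>)

lemma cont_q: "continuous_on T q" by (rule continuous_on_vector_derivative) (rule qd)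
lemma cont_p: "continuous_on T p" by (rule continuous_on_vector_derivative) (use gf in blast)
lemma cont_\<gamma>: "continuous_on T \<gamma>" by (rule continuous_on_vector_derivative) (use df in blast)
lemma cont_\<phi>: "continuous_on T \<phi>" by (rule continuous_on_vector_derivative) (rule \<phi>d)
lemma cont_Q: "continuous_on T Q" by (rule continuous_on_vector_derivative) (rule Qd)
lemma cont_P: "continuous_on T P" by (rule continuous_on_vector_derivative) (use ga in blast)

lemma QS: "t \<in> T \<Longrightarrow> Q t \<in> S"
  using stay DdD by (metis fst_conv image_eqI subsetD)

lemma ballS: "t \<in> T \<Longrightarrow> ball (Q t) \<delta> \<subseteq> S"
proof
  fix y assume t: "t \<in> T" and y: "y \<in> ball (Q t) \<delta>"
  have "(y, P t, \<mu>) \<in> ball (Q t, P t, \<mu>) \<delta>" using y by (simp add: dist_Pair_Pair)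
  then have "(y, P t, \<mu>) \<in> D" using nbhd stay t by blast
  then show "y \<in> S" by (metis fst_conv image_eqI)
qed

lemma dGa: "x \<in> S \<Longrightarrow> ((\<lambda>x. \<mu> * (a0 x \<bullet> Pt) + (1/2) * h0 x * \<mu>\<^sup>2 + U0 x) has_derivative
   (\<lambda>v. \<mu> * (A1 x v \<bullet> Pt) + 1/2 * H1 x v * \<mu>\<^sup>2 + V1 x v)) (at x)"
  by (auto intro!: derivative_eq_intros dA dH dV)

lemma ga_bound: assumes t: "t \<in> T" shows "norm (ga t) \<le> \<bar>\<mu>\<bar> * M * norm (P t) + (1/2 * \<mu>\<^sup>2 * M + M)"
proof -
  have x: "Q t \<in> S" using QS t .
  have "norm (ga t - 0) \<le> \<bar>\<mu>\<bar> * M * norm (P t) + (1/2 * \<mu>\<^sup>2 * M + M)"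
  proof (rule grad_diff[OF conjunct1[OF ga[OF t]] dGa[OF x] GDERIV_const has_derivative_const])
    fix v :: 'a
    have n: "norm v \<ge> 0" by simp
    have 1: "\<bar>A1 (Q t) v \<bullet> P t\<bar> \<le> (M * norm v) * norm (P t)"
      by (rule inner_le[OF bl_le]) (use bA[OF x] in auto)
    have 2: "\<bar>H1 (Q t) v\<bar> \<le> M * norm v" using bl_le[of "H1 (Q t)" M v] bH[OF x] by simp
    have 3: "\<bar>V1 (Q t) v\<bar> \<le> M * norm v" using bl_le[of "V1 (Q t)" M v] bV[OF x] by simp
    have "\<bar>\<mu> * (A1 (Q t) v \<bullet> P t)\<bar> \<le> \<bar>\<mu>\<bar> * ((M * norm v) * norm (P t))"
      using 1 by (simp add: abs_mult mult_left_mono)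
    moreover have "\<bar>1/2 * H1 (Q t) v * \<mu>\<^sup>2\<bar> \<le> 1/2 * (M * norm v) * \<mu>\<^sup>2"
      using 2 by (simp add: abs_mult mult_right_mono)
    ultimately show "\<bar>\<mu> * (A1 (Q t) v \<bullet> P t) + 1/2 * H1 (Q t) v * \<mu>\<^sup>2 + V1 (Q t) v - 0\<bar>
        \<le> (\<bar>\<mu>\<bar> * M * norm (P t) + (1/2 * \<mu>\<^sup>2 * M + M)) * norm v"
      using 3 by (simp add: algebra_simps)
  qed (use M0 in auto)
  then show ?thesis by simp
qed

abbreviation "c1 \<equiv> 1/2 * \<mu>\<^sup>2 * M + M"
abbreviation "RP \<equiv> (norm (P 0) + c1) * exp (\<bar>\<mu>\<bar> * M)"

lemma P_bound: assumes t: "t \<in> T" shows "norm (P t) \<le> RP"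
proof -
  have t0: "0 \<le> t" using t by simp
  have cP: "continuous_on {0..t} P" using cont_P t by (auto intro: continuous_on_subset)
  have cnP: "continuous_on {0..t} (\<lambda>s. norm (P s))" using cP by (intro continuous_intros)
  have c1: "c1 \<ge> 0" using M0 by simp
  have "norm (P s) \<le> (norm (P 0) + c1) + (\<epsilon> * (\<bar>\<mu>\<bar> * M)) * integral {0..s} (\<lambda>s. norm (P s))"
    if s: "s \<in> {0..t}" for s
  proof -
    have sT: "{0..s} \<subseteq> T" using s t by auto
    have "norm (P s - P 0) \<le> integral {0..s} (\<lambda>x. \<epsilon> * ((\<bar>\<mu>\<bar> * M) * norm (P x) + c1))"
    proof (rule ftc_bound[where f'="\<lambda>x. (- \<epsilon>) *\<^sub>R ga x"])
      show "0 \<le> s" using s by simp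
      fix x assume x: "x \<in> {0..s}"
      then have xT: "x \<in> T" using sT by auto
      show "(P has_vector_derivative (- \<epsilon>) *\<^sub>R ga x) (at x within {0..s})"
        using conjunct2[OF ga[OF xT]] has_vector_derivative_within_subset sT by blast
      show "norm ((- \<epsilon>) *\<^sub>R ga x) \<le> \<epsilon> * ((\<bar>\<mu>\<bar> * M) * norm (P x) + c1)"
        using ga_bound[OF xT] \<epsilon>0 by (simp add: mult_left_mono)
    next
      show "continuous_on {0..s} (\<lambda>x. \<epsilon> * ((\<bar>\<mu>\<bar> * M) * norm (P x) + c1))"
        using cP s by (auto intro!: continuous_intros intro: continuous_on_subset)
    qed
    also have "\<dots> = \<epsilon> * (\<bar>\<mu>\<bar> * M) * integral {0..s} (\<lambda>s. norm (P s)) + \<epsilon> * c1 * s"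
      by (rule int_aff) (use s cnP in \<open>auto intro: continuous_on_subset\<close>)
    also have "\<epsilon> * c1 * s \<le> c1"
    proof -
      have "\<epsilon> * s \<le> \<epsilon> * t" by (rule mult_left_mono) (use s \<epsilon>0 in auto)
      moreover have "\<epsilon> * t \<le> 1" using t \<epsilon>0 by (auto simp: field_simps)
      ultimately have "\<epsilon> * s \<le> 1" by simp
      then have "c1 * (\<epsilon> * s) \<le> c1 * 1" using c1 by (rule mult_left_mono)
      then show ?thesis by (simp add: ac_simps)
    qed
    finally show ?thesis using norm_triangle_ineq2[of "P s" "P 0"] by simp
  qed
  then have "norm (P t) \<le> (norm (P 0) + c1) * exp (\<epsilon> * (\<bar>\<mu>\<bar> * M) * t)"
    by (intro gronwall[OF t0 cnP]) (use c1 M0 \<epsilon>0 in auto)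
  also have "\<dots> \<le> RP"
  proof -
    have "\<epsilon> * t \<le> 1" using t \<epsilon>0 by (auto simp: field_simps)
    then have "\<epsilon> * (\<bar>\<mu>\<bar> * M) * t \<le> \<bar>\<mu>\<bar> * M" using M0
      by (metis abs_ge_zero mult.commute mult.left_commute mult_left_mono mult.right_neutral zero_le_mult_iff)
    then show ?thesis using c1 by (intro mult_left_mono) auto
  qed
  finally show ?thesis .
qed

abbreviation "Rp \<equiv> RP + \<delta>"
abbreviation "Rg \<equiv> \<bar>\<mu>\<bar> + \<delta>"
definition "err s = \<bar>\<gamma> s - \<mu>\<bar> + norm (q s - Q s) + norm (p s - P s)"

lemma near:
  assumes s: "s \<in> T" and e: "err s < \<delta>"
  shows "(q s, p s, \<gamma> s) \<in> D" "q s \<in> S" "q s \<in> ball (Q s) \<delta>" "norm (p s) \<le> Rp" "\<bar>\<gamma> s\<bar> \<le> Rg"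
proof -
  have "norm ((q s, p s, \<gamma> s) - (Q s, P s, \<mu>)) \<le> norm (q s - Q s) + (norm (p s - P s) + norm (\<gamma> s - \<mu>))"
    using norm_Pair_le[of "q s - Q s" "(p s - P s, \<gamma> s - \<mu>)"] norm_Pair_le[of "p s - P s" "\<gamma> s - \<mu>"] by simp
  then have "dist (q s, p s, \<gamma> s) (Q s, P s, \<mu>) < \<delta>" using e unfolding err_def
    by (simp add: dist_norm)
  then have "(q s, p s, \<gamma> s) \<in> ball (Q s, P s, \<mu>) \<delta>" by (simp add: dist_commute)
  moreover have "ball (Q s, P s, \<mu>) \<delta> \<subseteq> D" using nbhd stay s by blast
  ultimately show D: "(q s, p s, \<gamma> s) \<in> D" by blast
  then show "q s \<in> S" by (metis fst_conv image_eqI)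
  have "norm (q s - Q s) < \<delta>" using e unfolding err_def
    using norm_ge_zero[of "p s - P s"] abs_ge_zero[of "\<gamma> s - \<mu>"] by linarith
  then show "q s \<in> ball (Q s) \<delta>" by (simp add: dist_norm norm_minus_commute)
  have "norm (p s) \<le> norm (P s) + norm (p s - P s)" by (metis norm_triangle_sub add.commute)
  then show "norm (p s) \<le> Rp" using P_bound[OF s] e unfolding err_def
    using norm_ge_zero[of "q s - Q s"] abs_ge_zero[of "\<gamma> s - \<mu>"] by linarith
  show "\<bar>\<gamma> s\<bar> \<le> Rg" using e unfolding err_def
    using norm_ge_zero[of "q s - Q s"] norm_ge_zero[of "p s - P s"] by linarith
qed

lemma dF: "x \<in> S \<Longrightarrow> ((\<lambda>x. g * (pert \<epsilon> a0 a1 x \<psi> \<bullet> pp) + (1/2) * pert \<epsilon> h0 h1 x \<psi> * g\<^sup>2 + pert \<epsilon> U0 U1 x \<psi>) has_derivative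
  (\<lambda>v. g * ((A1 x v + \<epsilon> *\<^sub>R B1 (x, \<psi>) (v, 0)) \<bullet> pp) + 1/2 * (H1 x v + \<epsilon> * K1 (x, \<psi>) (v, 0)) * g\<^sup>2
      + (V1 x v + \<epsilon> * W1 (x, \<psi>) (v, 0)))) (at x)"
  unfolding pert_def
  by (auto intro!: derivative_eq_intros dA dH dV pd_q[OF dB] pd_q[OF dK] pd_q[OF dW])

lemma lipA: assumes s: "s \<in> T" and y: "y \<in> ball (Q s) \<delta>" shows "norm (A1 y - A1 (Q s)) \<le> M * norm (y - Q s)"
proof (rule lip[where r=\<delta> and F=A2])
  fix x assume "x \<in> ball (Q s) \<delta>" then have x: "x \<in> S" using ballS[OF s] by blast
  show "(A1 has_derivative blinfun_apply (A2 x)) (at x)" using dA2[OF x] .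
  show "norm (A2 x) \<le> M" using bA[OF x] by simp
qed (use y \<delta>0 in auto)

lemma lipH: assumes s: "s \<in> T" and y: "y \<in> ball (Q s) \<delta>" shows "norm (H1 y - H1 (Q s)) \<le> M * norm (y - Q s)"
proof (rule lip[where r=\<delta> and F=H2])
  fix x assume "x \<in> ball (Q s) \<delta>" then have x: "x \<in> S" using ballS[OF s] by blast
  show "(H1 has_derivative blinfun_apply (H2 x)) (at x)" using dH2[OF x] .
  show "norm (H2 x) \<le> M" using bH[OF x] by simp
qed (use y \<delta>0 in auto)

lemma lipV: assumes s: "s \<in> T" and y: "y \<in> ball (Q s) \<delta>" shows "norm (V1 y - V1 (Q s)) \<le> M * norm (y - Q s)"
proof (rule lip[where r=\<delta> and F=V2])
  fix x assume "x \<in> ball (Q s) \<delta>" then have x: "x \<in> S" using ballS[OF s] by blast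
  show "(V1 has_derivative blinfun_apply (V2 x)) (at x)" using dV2[OF x] .
  show "norm (V2 x) \<le> M" using bV[OF x] by simp
qed (use y \<delta>0 in auto)

lemma lipa: assumes s: "s \<in> T" and y: "y \<in> ball (Q s) \<delta>" shows "norm (a0 y - a0 (Q s)) \<le> M * norm (y - Q s)"
proof (rule lip[where r=\<delta> and F=A1])
  fix x assume "x \<in> ball (Q s) \<delta>" then have x: "x \<in> S" using ballS[OF s] by blast
  show "(a0 has_derivative blinfun_apply (A1 x)) (at x)" using dA[OF x] .
  show "norm (A1 x) \<le> M" using bA[OF x] by simp
qed (use y \<delta>0 in auto)


abbreviation "k1 \<equiv> \<bar>\<mu>\<bar> * M * Rp + 1/2 * M * Rg\<^sup>2 + M"
abbreviation "k3 \<equiv> M * Rp + 1/2 * M * (Rg + \<bar>\<mu>\<bar>)"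
abbreviation "Db \<equiv> Rg * M * Rp + 1/2 * M * Rg\<^sup>2 + M"

lemma Rp0: "Rp \<ge> 0" using M0 \<delta>0 by (simp add: add_nonneg_nonneg)
lemma Rg0: "Rg \<ge> 0" using \<delta>0 by simp

lemma perr:
  assumes s: "s \<in> T" and e: "err s < \<delta>"
  shows "norm (gf s - ga s) \<le> k1 * norm (q s - Q s) + (\<bar>\<mu>\<bar> * M) * norm (p s - P s) + k3 * \<bar>\<gamma> s - \<mu>\<bar> + \<epsilon> * Db"
proof -
  define x where "x = q s"
  define X where "X = Q s"
  define pp where "pp = p s"
  define PP where "PP = P s"
  define g where "g = \<gamma> s"
  define \<psi> where "\<psi> = \<phi> s"
  have x: "x \<in> S" and X: "X \<in> S" and xb: "x \<in> ball X \<delta>" and np: "norm pp \<le> Rp" and ng: "\<bar>g\<bar> \<le> Rg"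
    using near[OF s e] QS[OF s] unfolding x_def X_def pp_def g_def by auto
  have nxX: "norm (A1 x - A1 X) \<le> M * norm (x - X)" "norm (H1 x - H1 X) \<le> M * norm (x - X)"
    "norm (V1 x - V1 X) \<le> M * norm (x - X)"
    using lipA[OF s] lipH[OF s] lipV[OF s] xb unfolding X_def by auto
  have Rp0: "Rp \<ge> 0" using Rp0 .
  have Rg0: "Rg \<ge> 0" using Rg0 .
  have g2: "g\<^sup>2 \<le> Rg\<^sup>2" using power_mono[of "\<bar>g\<bar>" Rg 2] ng by simp
  have gf1: "GDERIV (\<lambda>x. g * (pert \<epsilon> a0 a1 x \<psi> \<bullet> pp) + (1/2) * pert \<epsilon> h0 h1 x \<psi> * g\<^sup>2
                          + pert \<epsilon> U0 U1 x \<psi>) x :> gf s"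
    using conjunct1[OF gf[OF s]] unfolding x_def g_def pp_def \<psi>_def .
  have ga1: "GDERIV (\<lambda>x. \<mu> * (a0 x \<bullet> PP) + (1/2) * h0 x * \<mu>\<^sup>2 + U0 x) X :> ga s"
    using conjunct1[OF ga[OF s]] unfolding X_def PP_def .
  have "norm (gf s - ga s) \<le> k1 * norm (x - X) + (\<bar>\<mu>\<bar> * M) * norm (pp - PP) + k3 * \<bar>g - \<mu>\<bar> + \<epsilon> * Db"
  proof (rule grad_diff[OF gf1 dF[OF x] ga1 dGa[OF X]])
    show "0 \<le> k1 * norm (x - X) + (\<bar>\<mu>\<bar> * M) * norm (pp - PP) + k3 * \<bar>g - \<mu>\<bar> + \<epsilon> * Db"
      using M0 Rp0 Rg0 \<epsilon>0 \<delta>0 by (intro add_nonneg_nonneg mult_nonneg_nonneg) auto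
    fix v :: 'a
    define nv where "nv = norm v"
    define a where "a = A1 x v"
    define b where "b = A1 X v"
    have na: "norm a \<le> M * nv" "norm b \<le> M * nv" using bl_le bA[OF x] bA[OF X] unfolding a_def b_def nv_def by auto
    have nab: "norm (a - b) \<le> (M * norm (x - X)) * nv"
      using bl_le[OF nxX(1), of v] unfolding a_def b_def nv_def by (simp add: blinfun.diff_left)
    have nB: "norm (B1 (x, \<psi>) (v, 0)) \<le> M * nv" using bl_le[of "B1 (x, \<psi>)" M "(v, 0)"] bB[OF x] unfolding nv_def by simp
    have nK: "\<bar>K1 (x, \<psi>) (v, 0)\<bar> \<le> M * nv" using bl_le[of "K1 (x, \<psi>)" M "(v, 0)"] bK[OF x] unfolding nv_def by simp
    have nW: "\<bar>W1 (x, \<psi>) (v, 0)\<bar> \<le> M * nv" using bl_le[of "W1 (x, \<psi>)" M "(v, 0)"] bW[OF x] unfolding nv_def by simp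
    have nH: "\<bar>H1 X v\<bar> \<le> M * nv" using bl_le[of "H1 X" M v] bH[OF X] unfolding nv_def by simp
    have nHd: "\<bar>H1 x v - H1 X v\<bar> \<le> (M * norm (x - X)) * nv"
      using bl_le[OF nxX(2), of v] unfolding nv_def by (simp add: blinfun.diff_left)
    have nVd: "\<bar>V1 x v - V1 X v\<bar> \<le> (M * norm (x - X)) * nv"
      using bl_le[OF nxX(3), of v] unfolding nv_def by (simp add: blinfun.diff_left)
    have E1: "\<bar>(g - \<mu>) * (a \<bullet> pp)\<bar> \<le> \<bar>g - \<mu>\<bar> * ((M * nv) * Rp)"
      by (rule amul[OF order_refl inner_le[OF na(1) np]])
    have E2: "\<bar>\<mu> * ((a - b) \<bullet> pp)\<bar> \<le> \<bar>\<mu>\<bar> * (((M * norm (x - X)) * nv) * Rp)"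
      by (rule amul[OF order_refl inner_le[OF nab np]])
    have E3: "\<bar>\<mu> * (b \<bullet> (pp - PP))\<bar> \<le> \<bar>\<mu>\<bar> * ((M * nv) * norm (pp - PP))"
      by (rule amul[OF order_refl inner_le[OF na(2) order_refl]])
    have E4: "\<bar>g * ((\<epsilon> *\<^sub>R B1 (x, \<psi>) (v, 0)) \<bullet> pp)\<bar> \<le> Rg * ((\<epsilon> * (M * nv)) * Rp)"
      by (rule amul[OF ng]) (rule inner_le[OF nscale[OF _ nB] np], use \<epsilon>0 in simp)
    have E5: "\<bar>(H1 x v - H1 X v) * g\<^sup>2\<bar> \<le> ((M * norm (x - X)) * nv) * Rg\<^sup>2"
      by (rule amul[OF nHd]) (use g2 in simp)
    have gm: "\<bar>g + \<mu>\<bar> \<le> Rg + \<bar>\<mu>\<bar>" using ng by linarith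
    have E6: "\<bar>H1 X v * ((g - \<mu>) * (g + \<mu>))\<bar> \<le> (M * nv) * (\<bar>g - \<mu>\<bar> * (Rg + \<bar>\<mu>\<bar>))"
      by (rule amul[OF nH]) (rule amul[OF _ gm], simp)
    have E7: "\<bar>(\<epsilon> * K1 (x, \<psi>) (v, 0)) * g\<^sup>2\<bar> \<le> (\<epsilon> * (M * nv)) * Rg\<^sup>2"
      by (rule amul) (use nK \<epsilon>0 g2 in \<open>auto simp: abs_mult mult_left_mono\<close>)
    have E8: "\<bar>\<epsilon> * W1 (x, \<psi>) (v, 0)\<bar> \<le> \<epsilon> * (M * nv)"
      using nW \<epsilon>0 by (simp add: abs_mult mult_left_mono)
    have eq: "g * ((A1 x v + \<epsilon> *\<^sub>R B1 (x, \<psi>) (v, 0)) \<bullet> pp) + 1/2 * (H1 x v + \<epsilon> * K1 (x, \<psi>) (v, 0)) * g\<^sup>2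
      + (V1 x v + \<epsilon> * W1 (x, \<psi>) (v, 0)) - (\<mu> * (A1 X v \<bullet> PP) + 1/2 * H1 X v * \<mu>\<^sup>2 + V1 X v)
      = (g - \<mu>) * (a \<bullet> pp) + \<mu> * ((a - b) \<bullet> pp) + \<mu> * (b \<bullet> (pp - PP)) + g * ((\<epsilon> *\<^sub>R B1 (x, \<psi>) (v, 0)) \<bullet> pp)
        + 1/2 * ((H1 x v - H1 X v) * g\<^sup>2) + 1/2 * (H1 X v * ((g - \<mu>) * (g + \<mu>)))
        + 1/2 * ((\<epsilon> * K1 (x, \<psi>) (v, 0)) * g\<^sup>2) + (V1 x v - V1 X v) + \<epsilon> * W1 (x, \<psi>) (v, 0)"
      unfolding a_def b_def by (simp add: algebra_simps inner_add_left inner_diff_left inner_diff_right power2_eq_square)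
    have rhs: "(k1 * norm (x - X) + (\<bar>\<mu>\<bar> * M) * norm (pp - PP) + k3 * \<bar>g - \<mu>\<bar> + \<epsilon> * Db) * norm v
      = \<bar>g - \<mu>\<bar> * ((M * nv) * Rp) + \<bar>\<mu>\<bar> * (((M * norm (x - X)) * nv) * Rp) + \<bar>\<mu>\<bar> * ((M * nv) * norm (pp - PP))
        + Rg * ((\<epsilon> * (M * nv)) * Rp) + 1/2 * (((M * norm (x - X)) * nv) * Rg\<^sup>2)
        + 1/2 * ((M * nv) * (\<bar>g - \<mu>\<bar> * (Rg + \<bar>\<mu>\<bar>))) + 1/2 * ((\<epsilon> * (M * nv)) * Rg\<^sup>2)
        + (M * norm (x - X)) * nv + \<epsilon> * (M * nv)"
      unfolding nv_def by (simp add: algebra_simps)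
    show "\<bar>g * ((A1 x v + \<epsilon> *\<^sub>R B1 (x, \<psi>) (v, 0)) \<bullet> pp) + 1/2 * (H1 x v + \<epsilon> * K1 (x, \<psi>) (v, 0)) * g\<^sup>2
      + (V1 x v + \<epsilon> * W1 (x, \<psi>) (v, 0)) - (\<mu> * (A1 X v \<bullet> PP) + 1/2 * H1 X v * \<mu>\<^sup>2 + V1 X v)\<bar>
      \<le> (k1 * norm (x - X) + (\<bar>\<mu>\<bar> * M) * norm (pp - PP) + k3 * \<bar>g - \<mu>\<bar> + \<epsilon> * Db) * norm v"
      unfolding eq rhs using E1 E2 E3 E4 E5 E6 E7 E8 nVd
      by (simp only: abs_le_iff) linarith
  qed
  then show ?thesis unfolding x_def X_def pp_def PP_def g_def .
qed

lemma qerr: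
  assumes s: "s \<in> T" and e: "err s < \<delta>"
  shows "norm (\<epsilon> *\<^sub>R (p s + \<gamma> s *\<^sub>R pert \<epsilon> a0 a1 (q s) (\<phi> s)) - \<epsilon> *\<^sub>R (P s + \<mu> *\<^sub>R a0 (Q s)))
     \<le> \<epsilon> * (norm (p s - P s) + M * \<bar>\<gamma> s - \<mu>\<bar> + \<bar>\<mu>\<bar> * M * norm (q s - Q s) + \<epsilon> * (Rg * M))"
proof -
  have x: "q s \<in> S" and xb: "q s \<in> ball (Q s) \<delta>" and ng: "\<bar>\<gamma> s\<bar> \<le> Rg"
    using near[OF s e] by auto
  have eq: "\<epsilon> *\<^sub>R (p s + \<gamma> s *\<^sub>R pert \<epsilon> a0 a1 (q s) (\<phi> s)) - \<epsilon> *\<^sub>R (P s + \<mu> *\<^sub>R a0 (Q s))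
    = \<epsilon> *\<^sub>R ((p s - P s) + (\<gamma> s - \<mu>) *\<^sub>R a0 (q s) + \<mu> *\<^sub>R (a0 (q s) - a0 (Q s)) + (\<gamma> s * \<epsilon>) *\<^sub>R a1 (q s) (\<phi> s))"
    unfolding pert_def by (simp add: algebra_simps)
  have n1: "norm ((\<gamma> s - \<mu>) *\<^sub>R a0 (q s)) \<le> \<bar>\<gamma> s - \<mu>\<bar> * M"
    by (rule nscale) (use bA[OF x] in auto)
  have n2: "norm (\<mu> *\<^sub>R (a0 (q s) - a0 (Q s))) \<le> \<bar>\<mu>\<bar> * (M * norm (q s - Q s))"
    by (rule nscale[OF order_refl lipa[OF s xb]])
  have n3: "norm ((\<gamma> s * \<epsilon>) *\<^sub>R a1 (q s) (\<phi> s)) \<le> (Rg * \<epsilon>) * M"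
    by (rule nscale) (use bB[OF x] ng \<epsilon>0 in \<open>auto simp: abs_mult mult_right_mono\<close>)
  have "norm ((p s - P s) + (\<gamma> s - \<mu>) *\<^sub>R a0 (q s) + \<mu> *\<^sub>R (a0 (q s) - a0 (Q s)) + (\<gamma> s * \<epsilon>) *\<^sub>R a1 (q s) (\<phi> s))
     \<le> norm (p s - P s) + \<bar>\<gamma> s - \<mu>\<bar> * M + \<bar>\<mu>\<bar> * (M * norm (q s - Q s)) + (Rg * \<epsilon>) * M"
    using n1 n2 n3 norm_triangle_le norm_triangle_ineq by (smt (verit))
  then have "\<epsilon> * norm ((p s - P s) + (\<gamma> s - \<mu>) *\<^sub>R a0 (q s) + \<mu> *\<^sub>R (a0 (q s) - a0 (Q s)) + (\<gamma> s * \<epsilon>) *\<^sub>R a1 (q s) (\<phi> s))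
     \<le> \<epsilon> * (norm (p s - P s) + \<bar>\<gamma> s - \<mu>\<bar> * M + \<bar>\<mu>\<bar> * (M * norm (q s - Q s)) + (Rg * \<epsilon>) * M)"
    by (rule mult_left_mono) (use \<epsilon>0 in simp)
  moreover have "norm (\<epsilon> *\<^sub>R ((p s - P s) + (\<gamma> s - \<mu>) *\<^sub>R a0 (q s) + \<mu> *\<^sub>R (a0 (q s) - a0 (Q s)) + (\<gamma> s * \<epsilon>) *\<^sub>R a1 (q s) (\<phi> s)))
     = \<epsilon> * norm ((p s - P s) + (\<gamma> s - \<mu>) *\<^sub>R a0 (q s) + \<mu> *\<^sub>R (a0 (q s) - a0 (Q s)) + (\<gamma> s * \<epsilon>) *\<^sub>R a1 (q s) (\<phi> s))"
    using \<epsilon>0 by simp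
  moreover have "\<epsilon> * (norm (p s - P s) + \<bar>\<gamma> s - \<mu>\<bar> * M + \<bar>\<mu>\<bar> * (M * norm (q s - Q s)) + (Rg * \<epsilon>) * M)
    = \<epsilon> * (norm (p s - P s) + M * \<bar>\<gamma> s - \<mu>\<bar> + \<bar>\<mu>\<bar> * M * norm (q s - Q s) + \<epsilon> * (Rg * M))"
    by (simp add: algebra_simps)
  ultimately show ?thesis unfolding eq by linarith
qed

lemma df_eq:
  assumes s: "s \<in> T" and e: "err s < \<delta>"
  shows "df s = \<gamma> s * (B1 (q s, \<phi> s) (0, 1) \<bullet> p s) + 1/2 * K1 (q s, \<phi> s) (0, 1) * (\<gamma> s)\<^sup>2 + W1 (q s, \<phi> s) (0, 1)"
proof -
  have x: "q s \<in> S" using near[OF s e] by auto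
  have d1: "((\<lambda>\<psi>. a1 (q s) \<psi> \<bullet> p s) has_field_derivative (B1 (q s, \<phi> s) (0, 1) \<bullet> p s)) (at (\<phi> s))"
    using inner_vd[OF pd_phi_v[OF dB[OF x]] has_vector_derivative_const[of "p s"]] by simp
  have d2: "((\<lambda>\<psi>. h1 (q s) \<psi>) has_field_derivative K1 (q s, \<phi> s) (0, 1)) (at (\<phi> s))"
    by (rule pd_phi[OF dK[OF x]])
  have d3: "((\<lambda>\<psi>. U1 (q s) \<psi>) has_field_derivative W1 (q s, \<phi> s) (0, 1)) (at (\<phi> s))"
    by (rule pd_phi[OF dW[OF x]])
  have "((\<lambda>\<psi>. \<gamma> s * (a1 (q s) \<psi> \<bullet> p s) + (1/2) * h1 (q s) \<psi> * (\<gamma> s)\<^sup>2 + U1 (q s) \<psi>) has_real_derivative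
     \<gamma> s * (B1 (q s, \<phi> s) (0, 1) \<bullet> p s) + 1/2 * K1 (q s, \<phi> s) (0, 1) * (\<gamma> s)\<^sup>2 + W1 (q s, \<phi> s) (0, 1)) (at (\<phi> s))"
    by (auto intro!: derivative_eq_intros d1 d2 d3)
  then show ?thesis using conjunct1[OF df[OF s]] DERIV_unique by blast
qed

definition "Gf s = \<gamma> s * (a1 (q s) (\<phi> s) \<bullet> p s) + 1/2 * h1 (q s) (\<phi> s) * (\<gamma> s)\<^sup>2 + U1 (q s) (\<phi> s)"
definition "Of s = pert \<epsilon> a0 a1 (q s) (\<phi> s) \<bullet> p s + pert \<epsilon> h0 h1 (q s) (\<phi> s) * \<gamma> s"
definition "Wf s = \<gamma> s + \<epsilon> * (Gf s / Of s)"

abbreviation "Qb \<equiv> Rp + Rg * (2 * M)"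
abbreviation "Ob \<equiv> 2 * M * Rp + 2 * M * Rg"
abbreviation "Gb \<equiv> \<bar>\<mu>\<bar> * M * RP + c1 + k1 * \<delta> + \<bar>\<mu>\<bar> * M * \<delta> + k3 * \<delta> + Db"
abbreviation "KG \<equiv> Db * (M * Rp) + Rg * (M * Gb + M * Qb * Rp) + 1/2 * (M * Qb * Rg\<^sup>2 + M * (2 * Rg * Db)) + M * Qb"
abbreviation "KO \<equiv> 2 * M * Gb + (M * Qb + M * (Qb + Ob)) * Rp + (M * Qb + M * (Qb + Ob)) * Rg + 2 * M * Db"
abbreviation "KW \<equiv> KG / C + Db * KO / C\<^sup>2"

lemma npert: "x \<in> S \<Longrightarrow> norm (pert \<epsilon> a0 a1 x \<psi>) \<le> 2 * M"
proof -
  assume x: "x \<in> S"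
  have "norm (pert \<epsilon> a0 a1 x \<psi>) \<le> norm (a0 x) + \<epsilon> * norm (a1 x \<psi>)"
    unfolding pert_def using \<epsilon>0 norm_triangle_ineq[of "a0 x" "\<epsilon> *\<^sub>R a1 x \<psi>"] by simp
  also have "\<dots> \<le> M + 1 * M" using bA[OF x] bB[OF x, of \<psi>] \<epsilon>0 \<epsilon>1 by (intro add_mono mult_mono) auto
  finally show ?thesis by simp
qed

lemma hpert: "x \<in> S \<Longrightarrow> \<bar>pert \<epsilon> h0 h1 x \<psi>\<bar> \<le> 2 * M"
proof -
  assume x: "x \<in> S"
  have "\<bar>pert \<epsilon> h0 h1 x \<psi>\<bar> \<le> \<bar>h0 x\<bar> + \<epsilon> * \<bar>h1 x \<psi>\<bar>"
    unfolding pert_def using \<epsilon>0 abs_triangle_ineq[of "h0 x" "\<epsilon> * h1 x \<psi>"] by (simp add: abs_mult)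
  also have "\<dots> \<le> M + 1 * M" using bH[OF x] bK[OF x, of \<psi>] \<epsilon>0 \<epsilon>1 by (intro add_mono mult_mono) auto
  finally show ?thesis by simp
qed

lemma bnds:
  assumes s: "s \<in> T" and e: "err s < \<delta>"
  shows "norm (\<epsilon> *\<^sub>R (p s + \<gamma> s *\<^sub>R pert \<epsilon> a0 a1 (q s) (\<phi> s))) \<le> \<epsilon> * Qb"
    "norm (gf s) \<le> Gb" "\<bar>df s\<bar> \<le> Db" "C < Of s" "\<bar>Of s\<bar> \<le> Ob" "\<bar>Gf s\<bar> \<le> Db"
proof -
  have D: "(q s, p s, \<gamma> s) \<in> D" and x: "q s \<in> S" and np: "norm (p s) \<le> Rp" and ng: "\<bar>\<gamma> s\<bar> \<le> Rg"
    using near[OF s e] by auto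
  have "norm (p s + \<gamma> s *\<^sub>R pert \<epsilon> a0 a1 (q s) (\<phi> s)) \<le> Rp + Rg * (2 * M)"
    using norm_triangle_ineq[of "p s" "\<gamma> s *\<^sub>R pert \<epsilon> a0 a1 (q s) (\<phi> s)"] np nscale[OF ng npert[OF x, of "\<phi> s"]] by linarith
  then show "norm (\<epsilon> *\<^sub>R (p s + \<gamma> s *\<^sub>R pert \<epsilon> a0 a1 (q s) (\<phi> s))) \<le> \<epsilon> * Qb"
    using \<epsilon>0 by (simp add: mult_left_mono)
  have "norm (gf s) \<le> norm (ga s) + norm (gf s - ga s)" by (metis norm_triangle_sub add.commute)
  moreover have "norm (ga s) \<le> \<bar>\<mu>\<bar> * M * RP + c1"
    using ga_bound[OF s] P_bound[OF s] M0 by (smt (verit) abs_ge_zero mult_left_mono zero_le_mult_iff)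
  moreover have "norm (gf s - ga s) \<le> k1 * \<delta> + (\<bar>\<mu>\<bar> * M) * \<delta> + k3 * \<delta> + \<epsilon> * Db"
  proof -
    have ee: "norm (q s - Q s) \<le> \<delta>" "norm (p s - P s) \<le> \<delta>" "\<bar>\<gamma> s - \<mu>\<bar> \<le> \<delta>"
      using e unfolding err_def by (smt (verit) norm_ge_zero abs_ge_zero)+
    have k0: "k1 \<ge> 0" "k3 \<ge> 0" "\<bar>\<mu>\<bar> * M \<ge> 0" using M0 Rp0 Rg0 by auto
    show ?thesis using perr[OF s e] mult_left_mono[OF ee(1) k0(1)] mult_left_mono[OF ee(2) k0(3)]
        mult_left_mono[OF ee(3) k0(2)] by linarith
  qed
  moreover have "\<epsilon> * Db \<le> Db" using \<epsilon>1 \<epsilon>0 M0 Rp0 Rg0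
    by (intro mult_left_le_one_le) (auto intro!: add_nonneg_nonneg mult_nonneg_nonneg)
  ultimately show "norm (gf s) \<le> Gb" by linarith
  have nB: "norm (B1 (q s, \<phi> s) (0, 1)) \<le> M * 1" using bl_le[of "B1 (q s, \<phi> s)" M "(0, 1)"] bB[OF x] by simp
  have nK: "\<bar>K1 (q s, \<phi> s) (0, 1)\<bar> \<le> M" using bl_le[of "K1 (q s, \<phi> s)" M "(0, 1)"] bK[OF x] by simp
  have nW: "\<bar>W1 (q s, \<phi> s) (0, 1)\<bar> \<le> M" using bl_le[of "W1 (q s, \<phi> s)" M "(0, 1)"] bW[OF x] by simp
  have g2: "(\<gamma> s)\<^sup>2 \<le> Rg\<^sup>2" using power_mono[of "\<bar>\<gamma> s\<bar> " Rg 2] ng by simp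
  have t1: "\<bar>\<gamma> s * (B1 (q s, \<phi> s) (0, 1) \<bullet> p s)\<bar> \<le> Rg * (M * 1 * Rp)"
    by (rule amul[OF ng inner_le[OF nB np]])
  have t2: "\<bar>K1 (q s, \<phi> s) (0, 1) * (\<gamma> s)\<^sup>2\<bar> \<le> M * Rg\<^sup>2" by (rule amul[OF nK]) (use g2 in simp)
  show "\<bar>df s\<bar> \<le> Db" unfolding df_eq[OF s e] using t1 t2 nW by (simp only: abs_le_iff) (simp add: algebra_simps; linarith)
  have nb1: "norm (a1 (q s) (\<phi> s)) \<le> M" "\<bar>h1 (q s) (\<phi> s)\<bar> \<le> M" "\<bar>U1 (q s) (\<phi> s)\<bar> \<le> M" using bB[OF x] bK[OF x] bW[OF x] by auto
  have t3: "\<bar>\<gamma> s * (a1 (q s) (\<phi> s) \<bullet> p s)\<bar> \<le> Rg * (M * Rp)" by (rule amul[OF ng inner_le[OF nb1(1) np]])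
  have t4: "\<bar>h1 (q s) (\<phi> s) * (\<gamma> s)\<^sup>2\<bar> \<le> M * Rg\<^sup>2" by (rule amul[OF nb1(2)]) (use g2 in simp)
  show "\<bar>Gf s\<bar> \<le> Db" unfolding Gf_def using t3 t4 nb1(3) by (simp only: abs_le_iff) (simp add: algebra_simps; linarith)
  show "C < Of s" using freq D unfolding Of_def by fast
  have t5: "\<bar>pert \<epsilon> a0 a1 (q s) (\<phi> s) \<bullet> p s\<bar> \<le> 2 * M * Rp" by (rule inner_le[OF npert[OF x] np])
  have t6: "\<bar>pert \<epsilon> h0 h1 (q s) (\<phi> s) * \<gamma> s\<bar> \<le> 2 * M * Rg" by (rule amul[OF hpert[OF x] ng])
  show "\<bar>Of s\<bar> \<le> Ob" unfolding Of_def using t5 t6 by linarith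
qed

lemma Wd_deriv:
  assumes s: "s \<in> T" and e: "err s < \<delta>"
    and qv_def: "qv = \<epsilon> *\<^sub>R (p s + \<gamma> s *\<^sub>R pert \<epsilon> a0 a1 (q s) (\<phi> s))"
    and Om_def: "Om = Of s" and pv_def: "pv = (- \<epsilon>) *\<^sub>R gf s" and gv_def: "gv = - \<epsilon> * df s"
    and Bv_def: "Bv = B1 (q s, \<phi> s) (qv, Om)" and Kv_def: "Kv = K1 (q s, \<phi> s) (qv, Om)" and Wv_def: "Wv = W1 (q s, \<phi> s) (qv, Om)"
  shows "(Gf has_field_derivative (gv * (a1 (q s) (\<phi> s) \<bullet> p s) + \<gamma> s * (a1 (q s) (\<phi> s) \<bullet> pv + Bv \<bullet> p s)
            + 1/2 * (Kv * (\<gamma> s)\<^sup>2 + h1 (q s) (\<phi> s) * (2 * \<gamma> s * gv)) + Wv)) (at s within T)"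
    "(Of has_field_derivative (pert \<epsilon> a0 a1 (q s) (\<phi> s) \<bullet> pv + (A1 (q s) qv + \<epsilon> *\<^sub>R Bv) \<bullet> p s
            + ((H1 (q s) qv + \<epsilon> * Kv) * \<gamma> s + pert \<epsilon> h0 h1 (q s) (\<phi> s) * gv))) (at s within T)"
proof -
  have x: "q s \<in> S" using near[OF s e] by auto
  have dq: "(q has_vector_derivative qv) (at s within T)" unfolding qv_def by (rule qd[OF s])
  have d\<phi>: "(\<phi> has_vector_derivative Om) (at s within T)" unfolding Om_def Of_def by (rule \<phi>d[OF s])
  have dp: "(p has_vector_derivative pv) (at s within T)" unfolding pv_def using gf[OF s] by blast
  have d\<gamma>: "(\<gamma> has_field_derivative gv) (at s within T)" unfolding gv_def
    using df[OF s] has_real_derivative_iff_has_vector_derivative by blast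
  have d\<alpha>: "((\<lambda>s. a1 (q s) (\<phi> s)) has_vector_derivative Bv) (at s within T)"
    unfolding Bv_def by (rule traj2[OF dB[OF x] dq d\<phi>])
  have d\<eta>: "((\<lambda>s. h1 (q s) (\<phi> s)) has_field_derivative Kv) (at s within T)"
    unfolding Kv_def has_real_derivative_iff_has_vector_derivative by (rule traj2[OF dK[OF x] dq d\<phi>])
  have d\<upsilon>: "((\<lambda>s. U1 (q s) (\<phi> s)) has_field_derivative Wv) (at s within T)"
    unfolding Wv_def has_real_derivative_iff_has_vector_derivative by (rule traj2[OF dW[OF x] dq d\<phi>])
  have dA0: "((\<lambda>s. a0 (q s)) has_vector_derivative A1 (q s) qv) (at s within T)"
    by (rule traj1[OF dA[OF x] dq])
  have dh0: "((\<lambda>s. h0 (q s)) has_field_derivative H1 (q s) qv) (at s within T)"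
    unfolding has_real_derivative_iff_has_vector_derivative by (rule traj1[OF dH[OF x] dq])
  have d\<alpha>p: "((\<lambda>s. a1 (q s) (\<phi> s) \<bullet> p s) has_field_derivative (a1 (q s) (\<phi> s) \<bullet> pv + Bv \<bullet> p s)) (at s within T)"
    by (rule inner_vd[OF d\<alpha> dp])
  have dpA: "((\<lambda>s. pert \<epsilon> a0 a1 (q s) (\<phi> s)) has_vector_derivative A1 (q s) qv + \<epsilon> *\<^sub>R Bv) (at s within T)"
    unfolding pert_def
    by (rule has_vector_derivative_add[OF dA0 bounded_linear.has_vector_derivative[OF bounded_linear_scaleR_right d\<alpha>]])
  have dAp: "((\<lambda>s. pert \<epsilon> a0 a1 (q s) (\<phi> s) \<bullet> p s) has_field_derivative
      (pert \<epsilon> a0 a1 (q s) (\<phi> s) \<bullet> pv + (A1 (q s) qv + \<epsilon> *\<^sub>R Bv) \<bullet> p s)) (at s within T)"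
    by (rule inner_vd[OF dpA dp])
  show "(Gf has_field_derivative (gv * (a1 (q s) (\<phi> s) \<bullet> p s) + \<gamma> s * (a1 (q s) (\<phi> s) \<bullet> pv + Bv \<bullet> p s)
            + 1/2 * (Kv * (\<gamma> s)\<^sup>2 + h1 (q s) (\<phi> s) * (2 * \<gamma> s * gv)) + Wv)) (at s within T)"
    unfolding Gf_def[abs_def]
    by (rule derivative_eq_intros d\<gamma> d\<alpha>p d\<eta> d\<upsilon> refl | simp)+
  show "(Of has_field_derivative (pert \<epsilon> a0 a1 (q s) (\<phi> s) \<bullet> pv + (A1 (q s) qv + \<epsilon> *\<^sub>R Bv) \<bullet> p s
            + ((H1 (q s) qv + \<epsilon> * Kv) * \<gamma> s + pert \<epsilon> h0 h1 (q s) (\<phi> s) * gv))) (at s within T)"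
  proof -
    have e1: "Of = (\<lambda>s. pert \<epsilon> a0 a1 (q s) (\<phi> s) \<bullet> p s + (h0 (q s) + \<epsilon> * h1 (q s) (\<phi> s)) * \<gamma> s)"
      unfolding Of_def[abs_def] pert_def by simp
    show ?thesis unfolding e1
      by (rule derivative_eq_intros d\<gamma> dAp d\<eta> dh0 refl | simp)+ (simp add: pert_def algebra_simps)
  qed
qed

lemma Wd:
  assumes s: "s \<in> T" and e: "err s < \<delta>"
  shows "\<exists>w. (Wf has_vector_derivative w) (at s within T) \<and> \<bar>w\<bar> \<le> \<epsilon> * \<epsilon> * KW"
proof -
  define qv where "qv = \<epsilon> *\<^sub>R (p s + \<gamma> s *\<^sub>R pert \<epsilon> a0 a1 (q s) (\<phi> s))"
  define Om where "Om = Of s"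
  define pv where "pv = (- \<epsilon>) *\<^sub>R gf s"
  define gv where "gv = - \<epsilon> * df s"
  define Bv where "Bv = B1 (q s, \<phi> s) (qv, Om)"
  define Kv where "Kv = K1 (q s, \<phi> s) (qv, Om)"
  define Wv where "Wv = W1 (q s, \<phi> s) (qv, Om)"
  define G' where "G' = gv * (a1 (q s) (\<phi> s) \<bullet> p s) + \<gamma> s * (a1 (q s) (\<phi> s) \<bullet> pv + Bv \<bullet> p s)
            + 1/2 * (Kv * (\<gamma> s)\<^sup>2 + h1 (q s) (\<phi> s) * (2 * \<gamma> s * gv)) + Wv"
  define O' where "O' = pert \<epsilon> a0 a1 (q s) (\<phi> s) \<bullet> pv + (A1 (q s) qv + \<epsilon> *\<^sub>R Bv) \<bullet> p s
            + ((H1 (q s) qv + \<epsilon> * Kv) * \<gamma> s + pert \<epsilon> h0 h1 (q s) (\<phi> s) * gv)"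
  note dd = Wd_deriv[OF s e qv_def Om_def pv_def gv_def Bv_def Kv_def Wv_def]
  have dG: "(Gf has_field_derivative G') (at s within T)" unfolding G'_def by (rule dd(1))
  have dO: "(Of has_field_derivative O') (at s within T)" unfolding O'_def by (rule dd(2))
  have d\<gamma>: "(\<gamma> has_field_derivative gv) (at s within T)" unfolding gv_def
    using df[OF s] has_real_derivative_iff_has_vector_derivative by blast
  have OmC: "C < Om" unfolding Om_def by (rule bnds(4)[OF s e])
  then have Om0: "Om \<noteq> 0" "Om > 0" using C0 by auto
  have "((\<lambda>s. Gf s / Of s) has_field_derivative (G' * Of s - Gf s * O') / (Of s * Of s)) (at s within T)"
    by (rule DERIV_divide[OF dG dO]) (use Om0 Om_def in simp)
  from DERIV_add[OF d\<gamma> DERIV_cmult[OF this, of \<epsilon>]]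
  have dW: "(Wf has_field_derivative gv + \<epsilon> * ((G' * Om - Gf s * O') / (Om * Om))) (at s within T)"
    unfolding Wf_def[abs_def] Om_def .
  have D: "(q s, p s, \<gamma> s) \<in> D" and x: "q s \<in> S" and np: "norm (p s) \<le> Rp" and ng: "\<bar>\<gamma> s\<bar> \<le> Rg"
    using near[OF s e] by auto
  have nqv: "norm qv \<le> \<epsilon> * Qb" unfolding qv_def by (rule bnds(1)[OF s e])
  have npv: "norm pv \<le> \<epsilon> * Gb" unfolding pv_def using bnds(2)[OF s e] \<epsilon>0 by (simp add: mult_left_mono)
  have ngv: "\<bar>gv\<bar> \<le> \<epsilon> * Db" unfolding gv_def using bnds(3)[OF s e] \<epsilon>0 by (simp add: abs_mult mult_left_mono)
  have nOm: "\<bar>Om\<bar> \<le> Ob" unfolding Om_def by (rule bnds(5)[OF s e])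
  have nGf: "\<bar>Gf s\<bar> \<le> Db" by (rule bnds(6)[OF s e])
  have Qb0: "Qb \<ge> 0" using Rp0 Rg0 M0 by simp
  have eQb: "\<epsilon> * Qb \<le> Qb" using \<epsilon>1 \<epsilon>0 Qb0 by (simp add: mult_left_le_one_le)
  have nqO: "norm (qv, Om) \<le> Qb + Ob" using norm_Pair_le[of qv Om] nqv nOm eQb by (simp only: real_norm_def)
  have na1: "norm (a1 (q s) (\<phi> s)) \<le> M" "\<bar>h1 (q s) (\<phi> s)\<bar> \<le> M" using bB[OF x] bK[OF x] by auto
  have nBv: "norm Bv \<le> M * (Qb + Ob)" unfolding Bv_def
    using bl_le2[OF conjunct2[OF bB[OF x]] nqO M0] .
  have nKv: "\<bar>Kv\<bar> \<le> M * (Qb + Ob)" unfolding Kv_def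
    using bl_le2[OF conjunct2[OF bK[OF x]] nqO M0] by simp
  have nqv0: "norm (qv, 0::real) \<le> \<epsilon> * Qb" using nqv by simp
  have nB0: "norm (B1 (q s, \<phi> s) (qv, 0)) \<le> M * (\<epsilon> * Qb)"
    using bl_le2[OF conjunct2[OF bB[OF x]] nqv0 M0] by simp
  have nK0: "\<bar>K1 (q s, \<phi> s) (qv, 0)\<bar> \<le> M * (\<epsilon> * Qb)"
    using bl_le2[OF conjunct2[OF bK[OF x]] nqv0 M0] by simp
  have nW0: "\<bar>W1 (q s, \<phi> s) (qv, 0)\<bar> \<le> M * (\<epsilon> * Qb)"
    using bl_le2[OF conjunct2[OF bW[OF x]] nqv0 M0] by simp
  have nA: "norm (A1 (q s) qv) \<le> M * (\<epsilon> * Qb)"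
    using bl_le2[OF conjunct1[OF conjunct2[OF bA[OF x]]] nqv M0] by simp
  have nH: "\<bar>H1 (q s) qv\<bar> \<le> M * (\<epsilon> * Qb)"
    using bl_le2[OF conjunct1[OF conjunct2[OF bH[OF x]]] nqv M0] by simp
  have g2: "(\<gamma> s)\<^sup>2 \<le> Rg\<^sup>2" using power_mono[of "\<bar>\<gamma> s\<bar> " Rg 2] ng by simp
  define E where "E = gv * (a1 (q s) (\<phi> s) \<bullet> p s) + \<gamma> s * (a1 (q s) (\<phi> s) \<bullet> pv + B1 (q s, \<phi> s) (qv, 0) \<bullet> p s)
      + 1/2 * (K1 (q s, \<phi> s) (qv, 0) * (\<gamma> s)\<^sup>2 + h1 (q s) (\<phi> s) * (2 * \<gamma> s * gv)) + W1 (q s, \<phi> s) (qv, 0)"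
  have GE: "G' = E + df s * Om"
  proof -
    have "Bv = B1 (q s, \<phi> s) (qv, 0) + Om *\<^sub>R B1 (q s, \<phi> s) (0, 1)" unfolding Bv_def by (rule blin_split)
    moreover have "Kv = K1 (q s, \<phi> s) (qv, 0) + Om * K1 (q s, \<phi> s) (0, 1)" unfolding Kv_def using blin_split[of "K1 (q s, \<phi> s)" qv Om] by simp
    moreover have "Wv = W1 (q s, \<phi> s) (qv, 0) + Om * W1 (q s, \<phi> s) (0, 1)" unfolding Wv_def using blin_split[of "W1 (q s, \<phi> s)" qv Om] by simp
    ultimately show ?thesis unfolding G'_def E_def df_eq[OF s e]
      by (simp add: algebra_simps inner_add_left)
  qed
  have e1: "\<bar>gv * (a1 (q s) (\<phi> s) \<bullet> p s)\<bar> \<le> (\<epsilon> * Db) * (M * Rp)" by (rule amul[OF ngv inner_le[OF na1(1) np]])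
  have e2: "\<bar>a1 (q s) (\<phi> s) \<bullet> pv + B1 (q s, \<phi> s) (qv, 0) \<bullet> p s\<bar> \<le> M * (\<epsilon> * Gb) + (M * (\<epsilon> * Qb)) * Rp"
    using inner_le[OF na1(1) npv] inner_le[OF nB0 np] by linarith
  have e3: "\<bar>\<gamma> s * (a1 (q s) (\<phi> s) \<bullet> pv + B1 (q s, \<phi> s) (qv, 0) \<bullet> p s)\<bar> \<le> Rg * (M * (\<epsilon> * Gb) + (M * (\<epsilon> * Qb)) * Rp)"
    by (rule amul[OF ng e2])
  have e4: "\<bar>K1 (q s, \<phi> s) (qv, 0) * (\<gamma> s)\<^sup>2\<bar> \<le> (M * (\<epsilon> * Qb)) * Rg\<^sup>2" by (rule amul[OF nK0]) (use g2 in simp)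
  have e5': "\<bar>2 * \<gamma> s * gv\<bar> \<le> 2 * Rg * (\<epsilon> * Db)" proof -
    have "\<bar>2 * \<gamma> s * gv\<bar> = 2 * (\<bar>\<gamma> s\<bar> * \<bar>gv\<bar>)" by (simp add: abs_mult)
    moreover have "\<bar>\<gamma> s\<bar> * \<bar>gv\<bar> \<le> Rg * (\<epsilon> * Db)" using amul[OF ng ngv] by (simp only: abs_mult)
    ultimately show ?thesis by linarith
  qed
  have e5: "\<bar>h1 (q s) (\<phi> s) * (2 * \<gamma> s * gv)\<bar> \<le> M * (2 * Rg * (\<epsilon> * Db))" by (rule amul[OF na1(2) e5'])
  have nE: "\<bar>E\<bar> \<le> \<epsilon> * KG"
  proof -
    have "\<bar>E\<bar> \<le> (\<epsilon> * Db) * (M * Rp) + Rg * (M * (\<epsilon> * Gb) + (M * (\<epsilon> * Qb)) * Rp)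
        + 1/2 * ((M * (\<epsilon> * Qb)) * Rg\<^sup>2 + M * (2 * Rg * (\<epsilon> * Db))) + M * (\<epsilon> * Qb)"
      unfolding E_def by (rule sum5[OF e1 e3 e4 e5 nW0])
    also have "\<dots> = \<epsilon> * KG" by (rule KG_id)
    finally show ?thesis .
  qed
  have o1: "\<bar>pert \<epsilon> a0 a1 (q s) (\<phi> s) \<bullet> pv\<bar> \<le> 2 * M * (\<epsilon> * Gb)" by (rule inner_le[OF npert[OF x] npv])
  have eB: "norm (\<epsilon> *\<^sub>R Bv) \<le> \<epsilon> * (M * (Qb + Ob))" using nBv \<epsilon>0 by (simp add: mult_left_mono)
  have eK: "\<bar>\<epsilon> * Kv\<bar> \<le> \<epsilon> * (M * (Qb + Ob))" using nKv \<epsilon>0 by (simp add: abs_mult mult_left_mono)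
  have o2': "norm (A1 (q s) qv + \<epsilon> *\<^sub>R Bv) \<le> M * (\<epsilon> * Qb) + \<epsilon> * (M * (Qb + Ob))"
    using norm_triangle_ineq[of "A1 (q s) qv" "\<epsilon> *\<^sub>R Bv"] nA eB by linarith
  have o2: "\<bar>(A1 (q s) qv + \<epsilon> *\<^sub>R Bv) \<bullet> p s\<bar> \<le> (M * (\<epsilon> * Qb) + \<epsilon> * (M * (Qb + Ob))) * Rp"
    by (rule inner_le[OF o2' np])
  have o3': "\<bar>H1 (q s) qv + \<epsilon> * Kv\<bar> \<le> M * (\<epsilon> * Qb) + \<epsilon> * (M * (Qb + Ob))" using nH eK by linarith
  have o3: "\<bar>(H1 (q s) qv + \<epsilon> * Kv) * \<gamma> s\<bar> \<le> (M * (\<epsilon> * Qb) + \<epsilon> * (M * (Qb + Ob))) * Rg" by (rule amul[OF o3' ng])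
  have o4: "\<bar>pert \<epsilon> h0 h1 (q s) (\<phi> s) * gv\<bar> \<le> 2 * M * (\<epsilon> * Db)" by (rule amul[OF hpert[OF x] ngv])
  have nO': "\<bar>O'\<bar> \<le> \<epsilon> * KO"
  proof -
    have "\<bar>O'\<bar> \<le> 2 * M * (\<epsilon> * Gb) + (M * (\<epsilon> * Qb) + \<epsilon> * (M * (Qb + Ob))) * Rp
       + (M * (\<epsilon> * Qb) + \<epsilon> * (M * (Qb + Ob))) * Rg + 2 * M * (\<epsilon> * Db)"
      unfolding O'_def by (rule sum4[OF o1 o2 o3 o4])
    also have "\<dots> = \<epsilon> * KO" by (rule KO_id)
    finally show ?thesis .
  qed
  have weq: "gv + \<epsilon> * ((G' * Om - Gf s * O') / (Om * Om)) = \<epsilon> * (E / Om - Gf s * O' / (Om * Om))"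
    unfolding GE gv_def using Om0 by (simp add: field_simps)
  have KG0: "0 \<le> \<epsilon> * KG" by (rule order_trans[OF abs_ge_zero nE])
  have KO0: "0 \<le> \<epsilon> * KO" by (rule order_trans[OF abs_ge_zero nO'])
  have f1: "\<bar>E / Om\<bar> \<le> \<epsilon> * KG / C"
  proof -
    have "\<bar>E / Om\<bar> = \<bar>E\<bar> / Om" using Om0 by simp
    also have "\<dots> \<le> \<epsilon> * KG / C" by (rule frac_le[OF KG0 nE C0]) (use OmC in simp)
    finally show ?thesis .
  qed
  have f2: "\<bar>Gf s * O' / (Om * Om)\<bar> \<le> Db * (\<epsilon> * KO) / C\<^sup>2"
  proof -
    have "\<bar>Gf s * O' / (Om * Om)\<bar> = \<bar>Gf s * O'\<bar> / (Om * Om)" using Om0 by (simp add: abs_mult)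
    also have "\<dots> \<le> Db * (\<epsilon> * KO) / C\<^sup>2"
    proof (rule frac_le)
      show "0 \<le> Db * (\<epsilon> * KO)" by (rule mult_nonneg_nonneg[OF order_trans[OF abs_ge_zero nGf] KO0])
      show "\<bar>Gf s * O'\<bar> \<le> Db * (\<epsilon> * KO)" by (rule amul[OF nGf nO'])
      show "0 < C\<^sup>2" using C0 by simp
      show "C\<^sup>2 \<le> Om * Om" using OmC C0 by (simp add: power2_eq_square mult_mono)
    qed
    finally show ?thesis .
  qed
  have "\<bar>E / Om - Gf s * O' / (Om * Om)\<bar> \<le> \<epsilon> * KG / C + Db * (\<epsilon> * KO) / C\<^sup>2"
    by (rule order_trans[OF abs_triangle_ineq4 add_mono[OF f1 f2]])
  also have "\<dots> = \<epsilon> * KW" by (rule KW_id)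
  finally have Y: "\<bar>E / Om - Gf s * O' / (Om * Om)\<bar> \<le> \<epsilon> * KW" .
  have "\<bar>\<epsilon> * (E / Om - Gf s * O' / (Om * Om))\<bar> = \<epsilon> * \<bar>E / Om - Gf s * O' / (Om * Om)\<bar>"
    using \<epsilon>0 by (simp only: abs_mult abs_of_pos)
  also have "\<dots> \<le> \<epsilon> * (\<epsilon> * KW)" by (rule mult_left_mono[OF Y]) (use \<epsilon>0 in simp)
  finally have bw: "\<bar>gv + \<epsilon> * ((G' * Om - Gf s * O') / (Om * Om))\<bar> \<le> \<epsilon> * \<epsilon> * KW"
    unfolding weq by (simp only: mult.assoc)
  have dWv: "(Wf has_vector_derivative (gv + \<epsilon> * ((G' * Om - Gf s * O') / (Om * Om)))) (at s within T)"
    using dW has_real_derivative_iff_has_vector_derivative by blast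
  show ?thesis using dWv bw by blast
qed

abbreviation "Kgam \<equiv> KW + 2 * (Db / C)"

lemma Gf_Of_bound: assumes s: "s \<in> T" and e: "err s < \<delta>" shows "\<bar>Gf s / Of s\<bar> \<le> Db / C"
proof -
  have "\<bar>Gf s / Of s\<bar> = \<bar>Gf s\<bar> / Of s" using bnds(4)[OF s e] C0 by simp
  also have "\<dots> \<le> Db / C"
    by (rule frac_le[OF order_trans[OF abs_ge_zero bnds(6)[OF s e]] bnds(6)[OF s e] C0]) (use bnds(4)[OF s e] in simp)
  finally show ?thesis .
qed

lemma err0: "err 0 = 0" unfolding err_def using init by simp

lemma gam_est:
  assumes t: "t \<in> T" and good: "\<forall>s\<in>{0..t}. err s < \<delta>"
  shows "\<bar>\<gamma> t - \<mu>\<bar> \<le> \<epsilon> * Kgam"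
proof -
  have sub: "{0..t} \<subseteq> T" using t by auto
  define wf where "wf s = (SOME w. (Wf has_vector_derivative w) (at s within T) \<and> \<bar>w\<bar> \<le> \<epsilon> * \<epsilon> * KW)" for s
  have wf: "(Wf has_vector_derivative wf s) (at s within T) \<and> \<bar>wf s\<bar> \<le> \<epsilon> * \<epsilon> * KW" if "s \<in> {0..t}" for s
    unfolding wf_def by (rule someI_ex) (use Wd sub good that in blast)
  have "norm (Wf t - Wf 0) \<le> (\<epsilon> * \<epsilon> * KW) * (t - 0)"
  proof (rule mvt_vec)
    show "0 \<le> t" using t by simp
    fix s assume s: "s \<in> {0..t}"
    show "(Wf has_vector_derivative wf s) (at s within {0..t})"
      using wf[OF s] has_vector_derivative_within_subset sub by blast
    show "norm (wf s) \<le> \<epsilon> * \<epsilon> * KW" using wf[OF s] by simp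
  qed
  also have "\<dots> \<le> (\<epsilon> * \<epsilon> * KW) * (1 / \<epsilon>)"
  proof (rule mult_left_mono)
    show "t - 0 \<le> 1 / \<epsilon>" using t by simp
    have "0 \<in> {0..t}" using t by simp
    then show "0 \<le> \<epsilon> * \<epsilon> * KW" using wf by (meson abs_ge_zero order_trans)
  qed
  also have "\<dots> = \<epsilon> * KW" by (rule eps_id[OF \<epsilon>0])
  finally have W: "\<bar>Wf t - Wf 0\<bar> \<le> \<epsilon> * KW" by simp
  have t0: "0 \<in> {0..t}" "t \<in> {0..t}" using t by auto
  have b1: "\<bar>Gf t / Of t\<bar> \<le> Db / C" by (rule Gf_Of_bound[OF t]) (use good t0 in blast)
  have b0: "\<bar>Gf 0 / Of 0\<bar> \<le> Db / C" by (rule Gf_Of_bound) (use good t0 sub in blast)+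
  have eq: "\<gamma> t - \<mu> = (Wf t - Wf 0) - \<epsilon> * (Gf t / Of t) + \<epsilon> * (Gf 0 / Of 0)"
    unfolding Wf_def using init by simp
  show ?thesis unfolding eq by (rule gam_comb[OF W b1 b0 \<epsilon>0])
qed

abbreviation "Lc \<equiv> 1 + \<bar>\<mu>\<bar> * M + k1"
abbreviation "K2 \<equiv> (M + k3) * Kgam + Rg * M + Db"

lemma k_nonneg: "0 \<le> k1" "0 \<le> k3" "0 \<le> Db" "0 \<le> Rg * M" "0 \<le> \<bar>\<mu>\<bar>"
  using M0 Rp0 Rg0 by (auto intro!: add_nonneg_nonneg mult_nonneg_nonneg)

lemma Kgam_nonneg: "0 \<le> Kgam"
proof -
  have "\<bar>\<gamma> 0 - \<mu>\<bar> \<le> \<epsilon> * Kgam" by (rule gam_est[OF T_ne]) (use err0 \<delta>0 in simp)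
  then show ?thesis by (rule pos_mult_nonneg[OF \<epsilon>0])
qed

lemma K2_nonneg: "0 \<le> K2"
  using add_nonneg_nonneg[OF add_nonneg_nonneg[OF mult_nonneg_nonneg[OF add_nonneg_nonneg[OF M0 k_nonneg(2)] Kgam_nonneg] k_nonneg(4)] k_nonneg(3)] .

lemma e_est:
  assumes t: "t \<in> T" and good: "\<forall>s\<in>{0..t}. err s < \<delta>"
  shows "norm (q t - Q t) + norm (p t - P t) \<le> 2 * \<epsilon> * K2 * exp (2 * \<epsilon> * Lc * t)"
proof -
  define E where "E s = norm (q s - Q s) + norm (p s - P s)" for s
  have sub: "{0..t} \<subseteq> T" using t by auto
  have cE: "continuous_on {0..t} E" unfolding E_def
    using cont_q cont_Q cont_p cont_P sub by (auto intro!: continuous_intros intro: continuous_on_subset)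
  define bf where "bf x = \<epsilon> * (Lc * E x + \<epsilon> * K2)" for x
  have dbound: "norm (\<epsilon> *\<^sub>R (p x + \<gamma> x *\<^sub>R pert \<epsilon> a0 a1 (q x) (\<phi> x)) - \<epsilon> *\<^sub>R (P x + \<mu> *\<^sub>R a0 (Q x))) \<le> bf x
      \<and> norm ((- \<epsilon>) *\<^sub>R gf x - (- \<epsilon>) *\<^sub>R ga x) \<le> bf x" if x: "x \<in> {0..t}" for x
  proof
    have xT: "x \<in> T" using x sub by auto
    have ex: "err x < \<delta>" using good x by auto
    have gx: "\<bar>\<gamma> x - \<mu>\<bar> \<le> \<epsilon> * Kgam" by (rule gam_est[OF xT]) (use good x in auto)
    note kn = k_nonneg
    show "norm (\<epsilon> *\<^sub>R (p x + \<gamma> x *\<^sub>R pert \<epsilon> a0 a1 (q x) (\<phi> x)) - \<epsilon> *\<^sub>R (P x + \<mu> *\<^sub>R a0 (Q x))) \<le> bf x"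
      unfolding bf_def E_def
      by (rule order_trans[OF qerr[OF xT ex] qb_gen[OF norm_ge_zero norm_ge_zero M0 kn(5) kn(1) kn(2) kn(3) \<epsilon>0 gx kn(4)]])
    have "norm ((- \<epsilon>) *\<^sub>R gf x - (- \<epsilon>) *\<^sub>R ga x) = \<epsilon> * norm (gf x - ga x)"
      using \<epsilon>0 by (simp add: scaleR_diff_right[symmetric] norm_minus_commute)
    also have "\<dots> \<le> \<epsilon> * (k1 * norm (q x - Q x) + (\<bar>\<mu>\<bar> * M) * norm (p x - P x) + k3 * \<bar>\<gamma> x - \<mu>\<bar> + \<epsilon> * Db)"
      by (rule mult_left_mono[OF perr[OF xT ex]]) (use \<epsilon>0 in simp)
    also have "\<dots> \<le> bf x" unfolding bf_def E_def
      by (rule pb_gen[OF norm_ge_zero norm_ge_zero M0 kn(5) kn(1) kn(2) kn(3) \<epsilon>0 gx kn(4)])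
    finally show "norm ((- \<epsilon>) *\<^sub>R gf x - (- \<epsilon>) *\<^sub>R ga x) \<le> bf x" .
  qed
  have Es: "E s \<le> 2 * \<epsilon> * K2 + (2 * \<epsilon> * Lc) * integral {0..s} E" if s: "s \<in> {0..t}" for s
  proof -
    have ss: "{0..s} \<subseteq> {0..t}" using s by auto
    have s0: "0 \<le> s" using s by simp
    have cb: "continuous_on {0..s} bf" unfolding bf_def using cE ss by (auto intro!: continuous_intros intro: continuous_on_subset)
    have 1: "norm ((q s - Q s) - (q 0 - Q 0)) \<le> integral {0..s} bf"
    proof (rule ftc_bound[OF s0 _ cb])
      fix x assume x: "x \<in> {0..s}"
      then have xT: "x \<in> T" using ss sub by auto
      show "((\<lambda>s. q s - Q s) has_vector_derivative
         (\<epsilon> *\<^sub>R (p x + \<gamma> x *\<^sub>R pert \<epsilon> a0 a1 (q x) (\<phi> x)) - \<epsilon> *\<^sub>R (P x + \<mu> *\<^sub>R a0 (Q x)))) (at x within {0..s})"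
        using has_vector_derivative_diff[OF qd[OF xT] Qd[OF xT]] has_vector_derivative_within_subset ss sub by blast
      show "norm (\<epsilon> *\<^sub>R (p x + \<gamma> x *\<^sub>R pert \<epsilon> a0 a1 (q x) (\<phi> x)) - \<epsilon> *\<^sub>R (P x + \<mu> *\<^sub>R a0 (Q x))) \<le> bf x"
        using dbound x ss by blast
    qed
    have 2: "norm ((p s - P s) - (p 0 - P 0)) \<le> integral {0..s} bf"
    proof (rule ftc_bound[OF s0 _ cb])
      fix x assume x: "x \<in> {0..s}"
      then have xT: "x \<in> T" using ss sub by auto
      show "((\<lambda>s. p s - P s) has_vector_derivative ((- \<epsilon>) *\<^sub>R gf x - (- \<epsilon>) *\<^sub>R ga x)) (at x within {0..s})"
        using has_vector_derivative_diff[OF conjunct2[OF gf[OF xT]] conjunct2[OF ga[OF xT]]]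
          has_vector_derivative_within_subset ss sub by blast
      show "norm ((- \<epsilon>) *\<^sub>R gf x - (- \<epsilon>) *\<^sub>R ga x) \<le> bf x" using dbound x ss by blast
    qed
    have "integral {0..s} bf = \<epsilon> * Lc * integral {0..s} E + \<epsilon> * (\<epsilon> * K2) * s"
      unfolding bf_def by (rule int_aff[OF s0]) (use cE ss in \<open>auto intro: continuous_on_subset\<close>)
    moreover have "E s \<le> integral {0..s} bf + integral {0..s} bf"
      using 1 2 init unfolding E_def by (intro add_mono) simp_all
    ultimately have "E s \<le> 2 * (\<epsilon> * Lc * integral {0..s} E + \<epsilon> * (\<epsilon> * K2) * s)"
      by (intro twice)
    moreover have "\<epsilon> * s \<le> 1"
    proof -
      have "\<epsilon> * s \<le> \<epsilon> * t" by (rule mult_left_mono) (use s \<epsilon>0 in auto)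
      moreover have "\<epsilon> * t \<le> 1" using t \<epsilon>0 by (auto simp: field_simps)
      ultimately show ?thesis by simp
    qed
    moreover have "0 \<le> K2" by (rule K2_nonneg)
    ultimately show ?thesis by (rule E_gen[OF _ _ _ \<epsilon>0])
  qed
  have "E t \<le> 2 * \<epsilon> * K2 * exp (2 * \<epsilon> * Lc * t)"
  proof (rule gronwall[OF _ cE])
    show "0 \<le> t" using t by simp
    show "0 \<le> 2 * \<epsilon> * K2" using \<epsilon>0 K2_nonneg by simp
    show "0 \<le> 2 * \<epsilon> * Lc" using k_nonneg \<epsilon>0 M0 by simp
  qed (rule Es)
  then show ?thesis unfolding E_def .
qed

abbreviation "Kf \<equiv> Kgam + 2 * K2 * exp (2 * Lc)"

lemma est:
  assumes t: "t \<in> T" and good: "\<forall>s\<in>{0..t}. err s < \<delta>"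
  shows "err t \<le> \<epsilon> * Kf"
proof -
  have g: "\<bar>\<gamma> t - \<mu>\<bar> \<le> \<epsilon> * Kgam" by (rule gam_est[OF t good])
  have E: "norm (q t - Q t) + norm (p t - P t) \<le> 2 * \<epsilon> * K2 * exp (2 * \<epsilon> * Lc * t)" by (rule e_est[OF t good])
  have et: "\<epsilon> * t \<le> 1" using t \<epsilon>0 by (auto simp: field_simps)
  have L0: "0 \<le> Lc" using k_nonneg M0 by simp
  have "\<bar>\<gamma> t - \<mu>\<bar> + (norm (q t - Q t) + norm (p t - P t)) \<le> \<epsilon> * Kf"
    by (rule fin_gen[OF g E et \<epsilon>0 K2_nonneg L0]) (use t in simp)
  then show ?thesis unfolding err_def by (simp only: add.assoc)
qed

lemma cont_err: "continuous_on T err"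
  unfolding err_def[abs_def] using cont_q cont_Q cont_p cont_P cont_\<gamma> by (intro continuous_intros)

lemma main_loc:
  assumes small: "\<epsilon> * Kf < \<delta> / 2"
  shows "\<forall>t\<in>T. err t \<le> \<epsilon> * Kf"
proof -
  have "\<forall>t\<in>T. \<forall>s\<in>{0..t}. err s \<le> \<delta> / 2"
  proof (rule bootstrap[OF _ cont_err])
    show "0 \<le> 1 / \<epsilon>" using \<epsilon>0 by simp
    show "err 0 < \<delta> / 2" using err0 \<delta>0 by simp
    fix t assume t: "t \<in> T" and h: "\<forall>s\<in>{0..t}. err s \<le> \<delta> / 2"
    have "\<forall>s\<in>{0..t}. err s < \<delta>" using h \<delta>0 by force
    then have "err t \<le> \<epsilon> * Kf" by (rule est[OF t])
    then show "err t < \<delta> / 2" using small by (rule order_le_less_trans)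
  qed
  then show ?thesis
  proof (intro ballI)
    fix t assume t: "t \<in> T" and h: "\<forall>t\<in>T. \<forall>s\<in>{0..t}. err s \<le> \<delta> / 2"
    have "\<forall>s\<in>{0..t}. err s < \<delta>"
    proof
      fix s assume "s \<in> {0..t}"
      then have "err s \<le> \<delta> / 2" using h t by blast
      then show "err s < \<delta>" using \<delta>0 by simp
    qed
    then show "err t \<le> \<epsilon> * Kf" by (rule est[OF t])
  qed
qed

lemma Kf_eq: "Kf = KF M \<mu> \<delta> C (norm (P 0))"
  unfolding KF_def Let_def by (rule refl)

lemma main_loc2:
  assumes small: "\<epsilon> * KF M \<mu> \<delta> C (norm (P 0)) < \<delta> / 2"
  shows "\<forall>t\<in>{0..1/\<epsilon>}. \<bar>\<gamma> t - \<mu>\<bar> + norm (q t - Q t) + norm (p t - P t) \<le> \<epsilon> * KF M \<mu> \<delta> C (norm (P 0))"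
  using main_loc[OF small[folded Kf_eq]] unfolding err_def Kf_eq .

end


lemma C3_ext:
  assumes "C3_bounded_on S f"
  obtains D1 D2 B where "\<And>x. x\<in>S \<Longrightarrow> (f has_derivative blinfun_apply (D1 x)) (at x)"
    "\<And>x. x\<in>S \<Longrightarrow> (D1 has_derivative blinfun_apply (D2 x)) (at x)" "B \<ge> 0"
    "\<And>x. x\<in>S \<Longrightarrow> norm (f x) \<le> B \<and> norm (D1 x) \<le> B \<and> norm (D2 x) \<le> B"
proof -
  from assms obtain D1 D2 D3 where h: "\<forall>x\<in>S. (f has_derivative blinfun_apply (D1 x)) (at x)"
    "\<forall>x\<in>S. (D1 has_derivative blinfun_apply (D2 x)) (at x)"
    "bounded (f ` S)" "bounded (D1 ` S)" "bounded (D2 ` S)"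
    unfolding C3_bounded_on_def by blast
  from h(3) obtain b1 where b1: "\<forall>x\<in>S. norm (f x) \<le> b1" by (auto simp: bounded_iff)
  from h(4) obtain b2 where b2: "\<forall>x\<in>S. norm (D1 x) \<le> b2" by (auto simp: bounded_iff)
  from h(5) obtain b3 where b3: "\<forall>x\<in>S. norm (D2 x) \<le> b3" by (auto simp: bounded_iff)
  show ?thesis
  proof (rule that[of D1 D2 "max 0 (max b1 (max b2 b3))"])
    fix x assume x: "x \<in> S"
    show "(f has_derivative blinfun_apply (D1 x)) (at x)" using h(1) x by blast
    show "(D1 has_derivative blinfun_apply (D2 x)) (at x)" using h(2) x by blast
    show "norm (f x) \<le> max 0 (max b1 (max b2 b3)) \<and> norm (D1 x) \<le> max 0 (max b1 (max b2 b3)) \<and> norm (D2 x) \<le> max 0 (max b1 (max b2 b3))"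
      using b1 b2 b3 x by auto
  qed simp
qed

lemma C3_ex:
  assumes "C3_bounded_on S f"
  shows "\<exists>D1 D2 B. (\<forall>x\<in>S. (f has_derivative blinfun_apply (D1 x)) (at x)) \<and>
    (\<forall>x\<in>S. (D1 has_derivative blinfun_apply (D2 x)) (at x)) \<and> B \<ge> 0 \<and>
    (\<forall>x\<in>S. norm (f x) \<le> B \<and> norm (D1 x) \<le> B \<and> norm (D2 x) \<le> B)"
proof -
  from assms obtain D1 D2 D3 where h: "\<forall>x\<in>S. (f has_derivative blinfun_apply (D1 x)) (at x)"
    "\<forall>x\<in>S. (D1 has_derivative blinfun_apply (D2 x)) (at x)"
    "bounded (f ` S)" "bounded (D1 ` S)" "bounded (D2 ` S)"
    unfolding C3_bounded_on_def by blast
  from h(3) obtain b1 where b1: "\<forall>x\<in>S. norm (f x) \<le> b1" by (auto simp: bounded_iff)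
  from h(4) obtain b2 where b2: "\<forall>x\<in>S. norm (D1 x) \<le> b2" by (auto simp: bounded_iff)
  from h(5) obtain b3 where b3: "\<forall>x\<in>S. norm (D2 x) \<le> b3" by (auto simp: bounded_iff)
  have "\<forall>x\<in>S. norm (f x) \<le> max 0 (max b1 (max b2 b3)) \<and> norm (D1 x) \<le> max 0 (max b1 (max b2 b3)) \<and> norm (D2 x) \<le> max 0 (max b1 (max b2 b3))"
    using b1 b2 b3 by fastforce
  then show ?thesis using h(1,2) by (intro exI[of _ D1] exI[of _ D2] exI[of _ "max 0 (max b1 (max b2 b3))"]) simp
qed

lemma small_gen: "0 < e \<Longrightarrow> e < min 1 (d / (2 * (\<bar>K\<bar> + 1))) \<Longrightarrow> 0 < d \<Longrightarrow> e * (K::real) < d / 2"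
proof -
  assume a: "0 < e" "e < min 1 (d / (2 * (\<bar>K\<bar> + 1)))" "0 < d"
  have "e * K \<le> e * \<bar>K\<bar>" using a by (simp add: mult_left_mono)
  also have "\<dots> \<le> (d / (2 * (\<bar>K\<bar> + 1))) * \<bar>K\<bar>" using a by (intro mult_right_mono) auto
  also have "\<dots> < d / 2"
  proof -
    have "(d / (2 * (\<bar>K\<bar> + 1))) * \<bar>K\<bar> = (d / 2) * (\<bar>K\<bar> / (\<bar>K\<bar> + 1))" by (simp add: field_simps)
    also have "\<dots> < (d / 2) * 1" using a by (intro mult_strict_left_mono) auto
    finally show ?thesis by simp
  qed
  finally show ?thesis .
qed

lemma final_gen: "x \<le> e * K \<Longrightarrow> 0 < e \<Longrightarrow> x < (\<bar>K::real\<bar> + 1) * e"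
proof -
  assume a: "x \<le> e * K" "0 < e"
  have "e * K \<le> e * \<bar>K\<bar>" using a by (simp add: mult_left_mono)
  also have "\<dots> < e * (\<bar>K\<bar> + 1)" using a by (intro mult_strict_left_mono) simp_all
  also have "\<dots> = (\<bar>K\<bar> + 1) * e" by (simp add: mult.commute)
  finally show ?thesis using a(1) by (rule order_le_less_trans[rotated])
qed

theorem theorem5p2:
  fixes a0 :: "'a::euclidean_space \<Rightarrow> 'a" and a1 :: "'a \<Rightarrow> real \<Rightarrow> 'a"
    and h0 U0 :: "'a \<Rightarrow> real" and h1 U1 :: "'a \<Rightarrow> real \<Rightarrow> real"
    and D D\<delta> :: "('a \<times> 'a \<times> real) set"
    and \<delta> C \<mu> :: real and Q0 P0 :: 'a
  assumes D_dom: "open D" "connected D"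
    and Dd_dom: "open D\<delta>" "connected D\<delta>" "D\<delta> \<subseteq> D"
    and \<delta>_pos: "\<delta> > 0"
    and nbhd: "\<forall>x\<in>D\<delta>. ball x \<delta> \<subseteq> D"
    and periodic: "\<forall>q\<in>fst ` D. \<forall>\<phi>. a1 q (\<phi> + 2*pi) = a1 q \<phi> \<and>
                      h1 q (\<phi> + 2*pi) = h1 q \<phi> \<and> U1 q (\<phi> + 2*pi) = U1 q \<phi>"
    and mean0: "\<forall>q\<in>fst ` D. integral {0..2*pi} (a1 q) = 0 \<and>
                   integral {0..2*pi} (h1 q) = 0 \<and> integral {0..2*pi} (U1 q) = 0"
    and C3: "C3_bounded_on (fst ` D) a0" "C3_bounded_on (fst ` D) h0"
            "C3_bounded_on (fst ` D) U0"
            "C3_bounded_on (fst ` D \<times> UNIV) (\<lambda>(q, \<phi>). a1 q \<phi>)"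
            "C3_bounded_on (fst ` D \<times> UNIV) (\<lambda>(q, \<phi>). h1 q \<phi>)"
            "C3_bounded_on (fst ` D \<times> UNIV) (\<lambda>(q, \<phi>). U1 q \<phi>)"
    and C_pos: "C > 0"
  shows "\<exists>\<epsilon>0>0. \<exists>C0. \<forall>\<epsilon> Q P q \<phi> p \<gamma>.
           0 < \<epsilon> \<and> \<epsilon> < \<epsilon>0
         \<and> (\<forall>(x, y, g)\<in>D. \<forall>\<psi>. pert \<epsilon> a0 a1 x \<psi> \<bullet> y + pert \<epsilon> h0 h1 x \<psi> * g > C)
         \<and> avg_sol \<epsilon> a0 h0 U0 Q P \<mu> \<and> Q 0 = Q0 \<and> P 0 = P0
         \<and> (\<forall>t\<in>{0..1/\<epsilon>}. (Q t, P t, \<mu>) \<in> D\<delta>)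
         \<and> full_sol \<epsilon> a0 a1 h0 h1 U0 U1 q \<phi> p \<gamma> \<and> q 0 = Q0 \<and> p 0 = P0 \<and> \<gamma> 0 = \<mu>
         \<longrightarrow> (\<forall>t\<in>{0..1/\<epsilon>}. \<bar>\<gamma> t - \<mu>\<bar> + norm (q t - Q t) + norm (p t - P t) < C0 * \<epsilon>)"

proof -
  let ?S = "fst ` D"
  obtain Aa Aa2 Ba where H1: "(\<forall>x\<in>?S. (a0 has_derivative blinfun_apply (Aa x)) (at x)) \<and>
    (\<forall>x\<in>?S. (Aa has_derivative blinfun_apply (Aa2 x)) (at x)) \<and> Ba \<ge> 0 \<and>
    (\<forall>x\<in>?S. norm (a0 x) \<le> Ba \<and> norm (Aa x) \<le> Ba \<and> norm (Aa2 x) \<le> Ba)"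
    using C3_ex[OF C3(1)] by blast
  have dA: "\<And>x. x\<in>?S \<Longrightarrow> (a0 has_derivative blinfun_apply (Aa x)) (at x)" by (rule bspec[OF conjunct1[OF H1]])
  have dA2: "\<And>x. x\<in>?S \<Longrightarrow> (Aa has_derivative blinfun_apply (Aa2 x)) (at x)" by (rule bspec[OF conjunct1[OF conjunct2[OF H1]]])
  have Ba: "Ba \<ge> 0" by (rule conjunct1[OF conjunct2[OF conjunct2[OF H1]]])
  have bA: "\<And>x. x\<in>?S \<Longrightarrow> norm (a0 x) \<le> Ba \<and> norm (Aa x) \<le> Ba \<and> norm (Aa2 x) \<le> Ba" by (rule bspec[OF conjunct2[OF conjunct2[OF conjunct2[OF H1]]]])
  obtain Hh Hh2 Bh where H2: "(\<forall>x\<in>?S. (h0 has_derivative blinfun_apply (Hh x)) (at x)) \<and>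
    (\<forall>x\<in>?S. (Hh has_derivative blinfun_apply (Hh2 x)) (at x)) \<and> Bh \<ge> 0 \<and>
    (\<forall>x\<in>?S. norm (h0 x) \<le> Bh \<and> norm (Hh x) \<le> Bh \<and> norm (Hh2 x) \<le> Bh)"
    using C3_ex[OF C3(2)] by blast
  have dH: "\<And>x. x\<in>?S \<Longrightarrow> (h0 has_derivative blinfun_apply (Hh x)) (at x)" by (rule bspec[OF conjunct1[OF H2]])
  have dH2: "\<And>x. x\<in>?S \<Longrightarrow> (Hh has_derivative blinfun_apply (Hh2 x)) (at x)" by (rule bspec[OF conjunct1[OF conjunct2[OF H2]]])
  have Bh: "Bh \<ge> 0" by (rule conjunct1[OF conjunct2[OF conjunct2[OF H2]]])
  have bH: "\<And>x. x\<in>?S \<Longrightarrow> norm (h0 x) \<le> Bh \<and> norm (Hh x) \<le> Bh \<and> norm (Hh2 x) \<le> Bh" by (rule bspec[OF conjunct2[OF conjunct2[OF conjunct2[OF H2]]]])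
  obtain Vv Vv2 Bv where H3: "(\<forall>x\<in>?S. (U0 has_derivative blinfun_apply (Vv x)) (at x)) \<and>
    (\<forall>x\<in>?S. (Vv has_derivative blinfun_apply (Vv2 x)) (at x)) \<and> Bv \<ge> 0 \<and>
    (\<forall>x\<in>?S. norm (U0 x) \<le> Bv \<and> norm (Vv x) \<le> Bv \<and> norm (Vv2 x) \<le> Bv)"
    using C3_ex[OF C3(3)] by blast
  have dV: "\<And>x. x\<in>?S \<Longrightarrow> (U0 has_derivative blinfun_apply (Vv x)) (at x)" by (rule bspec[OF conjunct1[OF H3]])
  have dV2: "\<And>x. x\<in>?S \<Longrightarrow> (Vv has_derivative blinfun_apply (Vv2 x)) (at x)" by (rule bspec[OF conjunct1[OF conjunct2[OF H3]]])
  have Bv: "Bv \<ge> 0" by (rule conjunct1[OF conjunct2[OF conjunct2[OF H3]]])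
  have bV: "\<And>x. x\<in>?S \<Longrightarrow> norm (U0 x) \<le> Bv \<and> norm (Vv x) \<le> Bv \<and> norm (Vv2 x) \<le> Bv" by (rule bspec[OF conjunct2[OF conjunct2[OF conjunct2[OF H3]]]])
  obtain Bb Bb2 Bba where H4: "(\<forall>x\<in>?S \<times> UNIV. ((\<lambda>(q, \<phi>). a1 q \<phi>) has_derivative blinfun_apply (Bb x)) (at x)) \<and>
    (\<forall>x\<in>?S \<times> UNIV. (Bb has_derivative blinfun_apply (Bb2 x)) (at x)) \<and> Bba \<ge> 0 \<and>
    (\<forall>x\<in>?S \<times> UNIV. norm ((\<lambda>(q, \<phi>). a1 q \<phi>) x) \<le> Bba \<and> norm (Bb x) \<le> Bba \<and> norm (Bb2 x) \<le> Bba)"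
    using C3_ex[OF C3(4)] by blast
  have dB': "\<And>x. x\<in>?S \<times> UNIV \<Longrightarrow> ((\<lambda>(q, \<phi>). a1 q \<phi>) has_derivative blinfun_apply (Bb x)) (at x)" by (rule bspec[OF conjunct1[OF H4]])
  have Bba: "Bba \<ge> 0" by (rule conjunct1[OF conjunct2[OF conjunct2[OF H4]]])
  have bB': "\<And>x. x\<in>?S \<times> UNIV \<Longrightarrow> norm ((\<lambda>(q, \<phi>). a1 q \<phi>) x) \<le> Bba \<and> norm (Bb x) \<le> Bba \<and> norm (Bb2 x) \<le> Bba" by (rule bspec[OF conjunct2[OF conjunct2[OF conjunct2[OF H4]]]])
  obtain Kk Kk2 Bk where H5: "(\<forall>x\<in>?S \<times> UNIV. ((\<lambda>(q, \<phi>). h1 q \<phi>) has_derivative blinfun_apply (Kk x)) (at x)) \<and>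
    (\<forall>x\<in>?S \<times> UNIV. (Kk has_derivative blinfun_apply (Kk2 x)) (at x)) \<and> Bk \<ge> 0 \<and>
    (\<forall>x\<in>?S \<times> UNIV. norm ((\<lambda>(q, \<phi>). h1 q \<phi>) x) \<le> Bk \<and> norm (Kk x) \<le> Bk \<and> norm (Kk2 x) \<le> Bk)"
    using C3_ex[OF C3(5)] by blast
  have dK': "\<And>x. x\<in>?S \<times> UNIV \<Longrightarrow> ((\<lambda>(q, \<phi>). h1 q \<phi>) has_derivative blinfun_apply (Kk x)) (at x)" by (rule bspec[OF conjunct1[OF H5]])
  have Bk: "Bk \<ge> 0" by (rule conjunct1[OF conjunct2[OF conjunct2[OF H5]]])
  have bK': "\<And>x. x\<in>?S \<times> UNIV \<Longrightarrow> norm ((\<lambda>(q, \<phi>). h1 q \<phi>) x) \<le> Bk \<and> norm (Kk x) \<le> Bk \<and> norm (Kk2 x) \<le> Bk" by (rule bspec[OF conjunct2[OF conjunct2[OF conjunct2[OF H5]]]])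
  obtain Ww Ww2 Bw where H6: "(\<forall>x\<in>?S \<times> UNIV. ((\<lambda>(q, \<phi>). U1 q \<phi>) has_derivative blinfun_apply (Ww x)) (at x)) \<and>
    (\<forall>x\<in>?S \<times> UNIV. (Ww has_derivative blinfun_apply (Ww2 x)) (at x)) \<and> Bw \<ge> 0 \<and>
    (\<forall>x\<in>?S \<times> UNIV. norm ((\<lambda>(q, \<phi>). U1 q \<phi>) x) \<le> Bw \<and> norm (Ww x) \<le> Bw \<and> norm (Ww2 x) \<le> Bw)"
    using C3_ex[OF C3(6)] by blast
  have dW': "\<And>x. x\<in>?S \<times> UNIV \<Longrightarrow> ((\<lambda>(q, \<phi>). U1 q \<phi>) has_derivative blinfun_apply (Ww x)) (at x)" by (rule bspec[OF conjunct1[OF H6]])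
  have Bw: "Bw \<ge> 0" by (rule conjunct1[OF conjunct2[OF conjunct2[OF H6]]])
  have bW': "\<And>x. x\<in>?S \<times> UNIV \<Longrightarrow> norm ((\<lambda>(q, \<phi>). U1 q \<phi>) x) \<le> Bw \<and> norm (Ww x) \<le> Bw \<and> norm (Ww2 x) \<le> Bw" by (rule bspec[OF conjunct2[OF conjunct2[OF conjunct2[OF H6]]]])
  define M where "M = Ba + Bh + Bv + Bba + Bk + Bw"
  have M0: "M \<ge> 0" unfolding M_def using Ba Bh Bv Bba Bk Bw by simp
  have le: "Ba \<le> M" "Bh \<le> M" "Bv \<le> M" "Bba \<le> M" "Bk \<le> M" "Bw \<le> M"
    unfolding M_def using Ba Bh Bv Bba Bk Bw by linarith+
  have bAM: "\<And>x. x\<in>?S \<Longrightarrow> norm (a0 x) \<le> M \<and> norm (Aa x) \<le> M \<and> norm (Aa2 x) \<le> M"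
  proof -
    fix x assume x: "x \<in> ?S"
    show "norm (a0 x) \<le> M \<and> norm (Aa x) \<le> M \<and> norm (Aa2 x) \<le> M" using bA[OF x] le(1) by (smt (verit))
  qed
  have bHM: "\<And>x. x\<in>?S \<Longrightarrow> \<bar>h0 x\<bar> \<le> M \<and> norm (Hh x) \<le> M \<and> norm (Hh2 x) \<le> M"
  proof -
    fix x assume x: "x \<in> ?S"
    show "\<bar>h0 x\<bar> \<le> M \<and> norm (Hh x) \<le> M \<and> norm (Hh2 x) \<le> M" using bH[OF x] le(2) unfolding real_norm_def by (smt (verit))
  qed
  have bVM: "\<And>x. x\<in>?S \<Longrightarrow> \<bar>U0 x\<bar> \<le> M \<and> norm (Vv x) \<le> M \<and> norm (Vv2 x) \<le> M"
  proof -
    fix x assume x: "x \<in> ?S"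
    show "\<bar>U0 x\<bar> \<le> M \<and> norm (Vv x) \<le> M \<and> norm (Vv2 x) \<le> M" using bV[OF x] le(3) unfolding real_norm_def by (smt (verit))
  qed
  have dB: "\<And>x y. x \<in> ?S \<Longrightarrow> (case_prod a1 has_derivative blinfun_apply (Bb (x, y))) (at (x, y))"
    by (rule dB') simp
  have dK: "\<And>x y. x \<in> ?S \<Longrightarrow> (case_prod h1 has_derivative blinfun_apply (Kk (x, y))) (at (x, y))"
    by (rule dK') simp
  have dW: "\<And>x y. x \<in> ?S \<Longrightarrow> (case_prod U1 has_derivative blinfun_apply (Ww (x, y))) (at (x, y))"
    by (rule dW') simp
  have bBM: "\<And>x y. x \<in> ?S \<Longrightarrow> norm (a1 x y) \<le> M \<and> norm (Bb (x, y)) \<le> M"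
  proof -
    fix x y assume x: "x \<in> ?S"
    have "norm (a1 x y) \<le> Bba \<and> norm (Bb (x, y)) \<le> Bba" using bB'[of "(x, y)"] x by simp
    then show "norm (a1 x y) \<le> M \<and> norm (Bb (x, y)) \<le> M" using le(4) by (smt (verit))
  qed
  have bKM: "\<And>x y. x \<in> ?S \<Longrightarrow> \<bar>h1 x y\<bar> \<le> M \<and> norm (Kk (x, y)) \<le> M"
  proof -
    fix x y assume x: "x \<in> ?S"
    have "\<bar>h1 x y\<bar> \<le> Bk \<and> norm (Kk (x, y)) \<le> Bk" using bK'[of "(x, y)"] x by simp
    then show "\<bar>h1 x y\<bar> \<le> M \<and> norm (Kk (x, y)) \<le> M" using le(5) by (smt (verit))
  qed
  have bWM: "\<And>x y. x \<in> ?S \<Longrightarrow> \<bar>U1 x y\<bar> \<le> M \<and> norm (Ww (x, y)) \<le> M"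
  proof -
    fix x y assume x: "x \<in> ?S"
    have "\<bar>U1 x y\<bar> \<le> Bw \<and> norm (Ww (x, y)) \<le> Bw" using bW'[of "(x, y)"] x by simp
    then show "\<bar>U1 x y\<bar> \<le> M \<and> norm (Ww (x, y)) \<le> M" using le(6) by (smt (verit))
  qed
  define K where "K = KF M \<mu> \<delta> C (norm P0)"
  define e0 where "e0 = min 1 (\<delta> / (2 * (\<bar>K\<bar> + 1)))"
  have e0: "e0 > 0" unfolding e0_def using \<delta>_pos by (simp add: add_pos_nonneg)
  show ?thesis
  proof (rule exI[of _ e0], intro conjI e0 exI[of _ "\<bar>K\<bar> + 1"] allI impI)
    fix \<epsilon> Q P q \<phi> p \<gamma>
    assume H: "0 < \<epsilon> \<and> \<epsilon> < e0
         \<and> (\<forall>(x, y, g)\<in>D. \<forall>\<psi>. pert \<epsilon> a0 a1 x \<psi> \<bullet> y + pert \<epsilon> h0 h1 x \<psi> * g > C)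
         \<and> avg_sol \<epsilon> a0 h0 U0 Q P \<mu> \<and> Q 0 = Q0 \<and> P 0 = P0
         \<and> (\<forall>t\<in>{0..1/\<epsilon>}. (Q t, P t, \<mu>) \<in> D\<delta>)
         \<and> full_sol \<epsilon> a0 a1 h0 h1 U0 U1 q \<phi> p \<gamma> \<and> q 0 = Q0 \<and> p 0 = P0 \<and> \<gamma> 0 = \<mu>"
    have h: "0 < \<epsilon>" "\<epsilon> < e0" "\<forall>(x, y, g)\<in>D. \<forall>\<psi>. pert \<epsilon> a0 a1 x \<psi> \<bullet> y + pert \<epsilon> h0 h1 x \<psi> * g > C"
      "avg_sol \<epsilon> a0 h0 U0 Q P \<mu>" "Q 0 = Q0" "P 0 = P0" "\<forall>t\<in>{0..1/\<epsilon>}. (Q t, P t, \<mu>) \<in> D\<delta>"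
      "full_sol \<epsilon> a0 a1 h0 h1 U0 U1 q \<phi> p \<gamma>" "q 0 = Q0" "p 0 = P0" "\<gamma> 0 = \<mu>"
      using H by blast+
    have small: "\<epsilon> * K < \<delta> / 2" using small_gen[OF h(1) _ \<delta>_pos, of K] h(2) unfolding e0_def by blast
    have e1: "\<epsilon> \<le> 1" using h(2) unfolding e0_def by simp
    have i1: "q 0 = Q 0" "p 0 = P 0" using h by simp_all
    interpret L: avgs a0 a1 h0 U0 h1 U1 D D\<delta> \<delta> C \<mu> M \<epsilon> Q P q p \<phi> \<gamma> Aa Aa2 Hh Vv Hh2 Vv2 Bb Kk Ww
      apply unfold_locales
      apply (fact dA) apply (fact dA2) apply (fact dH) apply (fact dH2) apply (fact dV) apply (fact dV2)
      apply (fact dB) apply (fact dK) apply (fact dW)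
      apply (fact bAM) apply (fact bHM) apply (fact bVM) apply (fact bBM) apply (fact bKM) apply (fact bWM)
      apply (fact M0) apply (fact \<delta>_pos) apply (fact C_pos) apply (fact h(1)) apply (fact e1)
      apply (fact nbhd) apply (fact Dd_dom(3)) apply (fact h(3)) apply (fact h(4)) apply (fact h(8)) apply (fact h(7))
      apply (fact i1(1)) apply (fact i1(2)) apply (fact h(11))
      done
    have KK: "KF M \<mu> \<delta> C (norm (P 0)) = K" unfolding K_def using h(6) by simp
    have R: "\<forall>t\<in>{0..1/\<epsilon>}. \<bar>\<gamma> t - \<mu>\<bar> + norm (q t - Q t) + norm (p t - P t) \<le> \<epsilon> * K"
      using L.main_loc2 small unfolding KK by blast
    show "\<forall>t\<in>{0..1/\<epsilon>}. \<bar>\<gamma> t - \<mu>\<bar> + norm (q t - Q t) + norm (p t - P t) < (\<bar>K\<bar> + 1) * \<epsilon>"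
    proof
      fix t assume "t \<in> {0..1/\<epsilon>}"
      then have "\<bar>\<gamma> t - \<mu>\<bar> + norm (q t - Q t) + norm (p t - P t) \<le> \<epsilon> * K" using R by blast
      then show "\<bar>\<gamma> t - \<mu>\<bar> + norm (q t - Q t) + norm (p t - P t) < (\<bar>K\<bar> + 1) * \<epsilon>" by (rule final_gen[OF _ h(1)])
    qed
  qed
qed


end
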